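(* Let $G$ be a finite group and $T$ a $G$-Tambara functor. If $I=\sqrt{\langle x_1,\dots,x_m\rangle}$ and $J=\sqrt{\langle y_1,\dots,y_n\rangle}$ are radical finitely generated Tambara ideals of $T$, then $I\cap J$ is again a radical finitely generated Tambara ideal, i.e. of the form $\sqrt{\langle z_1,\dots,z_k\rangle}$ for finitely many elements $z_j$.
   Context: All rings are commutative with unit. A $G$-Tambara functor $T$ consists of commutative rings $T(G/H)$ for subgroups $H\le G$ with restriction ring maps, additive transfer maps, multiplicative norm maps and conjugation isomorphisms satisfying the standard Tambara axioms (Hill–Mazur). A Tambara ideal is a family of ring ideals $I(G/H)\subseteq T(G/H)$ closed under restriction, transfer, norm and conjugation; intersection is levelwise. $\langle z_1,\dots,z_k\rangle$ (with $z_j\in T(G/H_j)$) is the smallest Tambara ideal containing each $z_j$ at its level. The product $IJ$ is the Tambara ideal generated by levelwise products. The radical $\sqrt I$ has $\sqrt I(G/H)=\{x\mid \langle x\rangle^n\subseteq I\text{ for some }n\ge1\}$. *)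

theory Defs
  imports "HOL-Algebra.Algebra" "HOL-Library.FuncSet"
begin

definition conjset :: "('g,'m) monoid_scheme \<Rightarrow> 'g \<Rightarrow> 'g set \<Rightarrow> 'g set" where
  "conjset G g H = (\<lambda>h. g \<otimes>\<^bsub>G\<^esub> h \<otimes>\<^bsub>G\<^esub> inv\<^bsub>G\<^esub> g) ` H"

definition dcoset :: "('g,'m) monoid_scheme \<Rightarrow> 'g set \<Rightarrow> 'g \<Rightarrow> 'g set \<Rightarrow> 'g set" where
  "dcoset G K g L = {k \<otimes>\<^bsub>G\<^esub> g \<otimes>\<^bsub>G\<^esub> l | k l. k \<in> K \<and> l \<in> L}"

definition dcosets :: "('g,'m) monoid_scheme \<Rightarrow> 'g set \<Rightarrow> 'g set \<Rightarrow> 'g set \<Rightarrow> 'g set set" where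
  "dcosets G H K L = (\<lambda>g. dcoset G K g L) ` H"

definition lcos :: "('g,'m) monoid_scheme \<Rightarrow> 'g set \<Rightarrow> 'g set \<Rightarrow> 'g set set" where
  "lcos G H K = (\<lambda>h. (h <#\<^bsub>G\<^esub> K)) ` H"

definition crep :: "'x set \<Rightarrow> 'x" where
  "crep D = (SOME x. x \<in> D)"

text \<open>Functions H/K \<rightarrow> {a,b} (encoded as bool, True = a), with the H-action.\<close>
definition bfuns :: "('g,'m) monoid_scheme \<Rightarrow> 'g set \<Rightarrow> 'g set \<Rightarrow> ('g set \<Rightarrow> bool) set" where
  "bfuns G H K = lcos G H K \<rightarrow>\<^sub>E (UNIV :: bool set)"

definition bact :: "('g,'m) monoid_scheme \<Rightarrow> 'g set \<Rightarrow> 'g set \<Rightarrow> 'g \<Rightarrow> ('g set \<Rightarrow> bool) \<Rightarrow> ('g set \<Rightarrow> bool)" where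
  "bact G H K h f = (\<lambda>C\<in>lcos G H K. f (((inv\<^bsub>G\<^esub> h) <#\<^bsub>G\<^esub> C)))"

definition bstab :: "('g,'m) monoid_scheme \<Rightarrow> 'g set \<Rightarrow> 'g set \<Rightarrow> ('g set \<Rightarrow> bool) \<Rightarrow> 'g set" where
  "bstab G H K f = {h \<in> H. bact G H K h f = f}"

definition borbits :: "('g,'m) monoid_scheme \<Rightarrow> 'g set \<Rightarrow> 'g set \<Rightarrow> ('g set \<Rightarrow> bool) set set" where
  "borbits G H K = (\<lambda>f. (\<lambda>h. bact G H K h f) ` H) ` bfuns G H K"

text \<open>Sections of the H-map H/L \<rightarrow> H/K (for L \<le> K \<le> H), with the H-action.\<close>
definition secs :: "('g,'m) monoid_scheme \<Rightarrow> 'g set \<Rightarrow> 'g set \<Rightarrow> 'g set \<Rightarrow> ('g set \<Rightarrow> 'g set) set" where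
  "secs G H K L = {s \<in> lcos G H K \<rightarrow>\<^sub>E lcos G H L. \<forall>C\<in>lcos G H K. s C \<subseteq> C}"

definition sact :: "('g,'m) monoid_scheme \<Rightarrow> 'g set \<Rightarrow> 'g set \<Rightarrow> 'g \<Rightarrow> ('g set \<Rightarrow> 'g set) \<Rightarrow> ('g set \<Rightarrow> 'g set)" where
  "sact G H K h s = (\<lambda>C\<in>lcos G H K. (h <#\<^bsub>G\<^esub> (s ((inv\<^bsub>G\<^esub> h) <#\<^bsub>G\<^esub> C))))"

definition sstab :: "('g,'m) monoid_scheme \<Rightarrow> 'g set \<Rightarrow> 'g set \<Rightarrow> ('g set \<Rightarrow> 'g set) \<Rightarrow> 'g set" where
  "sstab G H K s = {h \<in> H. sact G H K h s = s}"

definition sorbits :: "('g,'m) monoid_scheme \<Rightarrow> 'g set \<Rightarrow> 'g set \<Rightarrow> 'g set \<Rightarrow> ('g set \<Rightarrow> 'g set) set set" where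
  "sorbits G H K L = (\<lambda>s. (\<lambda>h. sact G H K h s) ` H) ` secs G H K L"

section \<open>Tambara functor data (Hill--Mazur style, on orbits G/H)\<close>

text \<open>tT H = T(G/H); tres H K : T(G/H) \<rightarrow> T(G/K) restriction (K \<le> H);
  ttr K H, tnm K H : T(G/K) \<rightarrow> T(G/H) transfer and norm (K \<le> H);
  tcj g H : T(G/H) \<rightarrow> T(G/gHg^-1) conjugation.\<close>
record ('g,'a) tdata =
  tT   :: "'g set \<Rightarrow> 'a ring"
  tres :: "'g set \<Rightarrow> 'g set \<Rightarrow> 'a \<Rightarrow> 'a"
  ttr  :: "'g set \<Rightarrow> 'g set \<Rightarrow> 'a \<Rightarrow> 'a"
  tnm  :: "'g set \<Rightarrow> 'g set \<Rightarrow> 'a \<Rightarrow> 'a"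
  tcj  :: "'g \<Rightarrow> 'g set \<Rightarrow> 'a \<Rightarrow> 'a"

definition sub2 :: "('g,'m) monoid_scheme \<Rightarrow> 'g set \<Rightarrow> 'g set \<Rightarrow> bool" where
  "sub2 G K H \<longleftrightarrow> subgroup K G \<and> subgroup H G \<and> K \<subseteq> H"

definition tf_rings :: "('g,'m) monoid_scheme \<Rightarrow> ('g,'a) tdata \<Rightarrow> bool" where
  "tf_rings G F \<longleftrightarrow> (\<forall>H. subgroup H G \<longrightarrow> cring (tT F H))"

definition tf_res :: "('g,'m) monoid_scheme \<Rightarrow> ('g,'a) tdata \<Rightarrow> bool" where
  "tf_res G F \<longleftrightarrow>
     (\<forall>H K. sub2 G K H \<longrightarrow> tres F H K \<in> ring_hom (tT F H) (tT F K)) \<and>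
     (\<forall>H. subgroup H G \<longrightarrow> (\<forall>x\<in>carrier (tT F H). tres F H H x = x)) \<and>
     (\<forall>H K L. sub2 G K H \<longrightarrow> sub2 G L K \<longrightarrow>
        (\<forall>x\<in>carrier (tT F H). tres F K L (tres F H K x) = tres F H L x))"

definition tf_tr :: "('g,'m) monoid_scheme \<Rightarrow> ('g,'a) tdata \<Rightarrow> bool" where
  "tf_tr G F \<longleftrightarrow>
     (\<forall>H K. sub2 G K H \<longrightarrow> ttr F K H \<in> carrier (tT F K) \<rightarrow> carrier (tT F H) \<and>
        (\<forall>x\<in>carrier (tT F K). \<forall>y\<in>carrier (tT F K).
           ttr F K H (x \<oplus>\<^bsub>tT F K\<^esub> y) = ttr F K H x \<oplus>\<^bsub>tT F H\<^esub> ttr F K H y)) \<and>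
     (\<forall>H. subgroup H G \<longrightarrow> (\<forall>x\<in>carrier (tT F H). ttr F H H x = x)) \<and>
     (\<forall>H K L. sub2 G K H \<longrightarrow> sub2 G L K \<longrightarrow>
        (\<forall>x\<in>carrier (tT F L). ttr F K H (ttr F L K x) = ttr F L H x))"

definition tf_nm :: "('g,'m) monoid_scheme \<Rightarrow> ('g,'a) tdata \<Rightarrow> bool" where
  "tf_nm G F \<longleftrightarrow>
     (\<forall>H K. sub2 G K H \<longrightarrow> tnm F K H \<in> carrier (tT F K) \<rightarrow> carrier (tT F H) \<and>
        tnm F K H \<one>\<^bsub>tT F K\<^esub> = \<one>\<^bsub>tT F H\<^esub> \<and>
        (\<forall>x\<in>carrier (tT F K). \<forall>y\<in>carrier (tT F K).
           tnm F K H (x \<otimes>\<^bsub>tT F K\<^esub> y) = tnm F K H x \<otimes>\<^bsub>tT F H\<^esub> tnm F K H y)) \<and>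
     (\<forall>H. subgroup H G \<longrightarrow> (\<forall>x\<in>carrier (tT F H). tnm F H H x = x)) \<and>
     (\<forall>H K L. sub2 G K H \<longrightarrow> sub2 G L K \<longrightarrow>
        (\<forall>x\<in>carrier (tT F L). tnm F K H (tnm F L K x) = tnm F L H x))"

definition tf_cj :: "('g,'m) monoid_scheme \<Rightarrow> ('g,'a) tdata \<Rightarrow> bool" where
  "tf_cj G F \<longleftrightarrow>
     (\<forall>g H. g \<in> carrier G \<longrightarrow> subgroup H G \<longrightarrow>
        tcj F g H \<in> ring_hom (tT F H) (tT F (conjset G g H))) \<and>
     (\<forall>H. subgroup H G \<longrightarrow> (\<forall>x\<in>carrier (tT F H). tcj F \<one>\<^bsub>G\<^esub> H x = x)) \<and>
     (\<forall>g g' H. g \<in> carrier G \<longrightarrow> g' \<in> carrier G \<longrightarrow> subgroup H G \<longrightarrow>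
        (\<forall>x\<in>carrier (tT F H).
           tcj F (g \<otimes>\<^bsub>G\<^esub> g') H x = tcj F g (conjset G g' H) (tcj F g' H x))) \<and>
     (\<forall>h H. subgroup H G \<longrightarrow> h \<in> H \<longrightarrow> (\<forall>x\<in>carrier (tT F H). tcj F h H x = x))"

definition tf_cj_compat :: "('g,'m) monoid_scheme \<Rightarrow> ('g,'a) tdata \<Rightarrow> bool" where
  "tf_cj_compat G F \<longleftrightarrow>
     (\<forall>g H K. g \<in> carrier G \<longrightarrow> sub2 G K H \<longrightarrow>
        (\<forall>x\<in>carrier (tT F H). tcj F g K (tres F H K x)
            = tres F (conjset G g H) (conjset G g K) (tcj F g H x)) \<and>
        (\<forall>x\<in>carrier (tT F K). tcj F g H (ttr F K H x)
            = ttr F (conjset G g K) (conjset G g H) (tcj F g K x)) \<and>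
        (\<forall>x\<in>carrier (tT F K). tcj F g H (tnm F K H x)
            = tnm F (conjset G g K) (conjset G g H) (tcj F g K x)))"

definition tf_mackey :: "('g,'m) monoid_scheme \<Rightarrow> ('g,'a) tdata \<Rightarrow> bool" where
  "tf_mackey G F \<longleftrightarrow>
     (\<forall>H K L. sub2 G K H \<longrightarrow> sub2 G L H \<longrightarrow> (\<forall>a\<in>carrier (tT F L).
        tres F H K (ttr F L H a) =
          finsum (tT F K) (\<lambda>D. let g = crep D; M = K \<inter> conjset G g L in
             ttr F M K (tres F (conjset G g L) M (tcj F g L a))) (dcosets G H K L)
      \<and> tres F H K (tnm F L H a) =
          finprod (tT F K) (\<lambda>D. let g = crep D; M = K \<inter> conjset G g L in
             tnm F M K (tres F (conjset G g L) M (tcj F g L a))) (dcosets G H K L)))"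

definition tf_frob :: "('g,'m) monoid_scheme \<Rightarrow> ('g,'a) tdata \<Rightarrow> bool" where
  "tf_frob G F \<longleftrightarrow>
     (\<forall>H K. sub2 G K H \<longrightarrow> (\<forall>a\<in>carrier (tT F K). \<forall>b\<in>carrier (tT F H).
        ttr F K H (a \<otimes>\<^bsub>tT F K\<^esub> tres F H K b) = ttr F K H a \<otimes>\<^bsub>tT F H\<^esub> b))"

definition tf_recip_sum :: "('g,'m) monoid_scheme \<Rightarrow> ('g,'a) tdata \<Rightarrow> bool" where
  "tf_recip_sum G F \<longleftrightarrow>
     (\<forall>H K. sub2 G K H \<longrightarrow> (\<forall>a\<in>carrier (tT F K). \<forall>b\<in>carrier (tT F K).
        tnm F K H (a \<oplus>\<^bsub>tT F K\<^esub> b) =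
          finsum (tT F H) (\<lambda>Ob. let f = crep Ob; S = bstab G H K f in
            ttr F S H (finprod (tT F S) (\<lambda>D. let g = crep D; M = S \<inter> conjset G g K in
               tnm F M S (tres F (conjset G g K) M
                 (tcj F g K (if f ((g <#\<^bsub>G\<^esub> K)) then a else b)))) (dcosets G H S K)))
          (borbits G H K)))"

definition tf_recip_tr :: "('g,'m) monoid_scheme \<Rightarrow> ('g,'a) tdata \<Rightarrow> bool" where
  "tf_recip_tr G F \<longleftrightarrow>
     (\<forall>H K L. sub2 G K H \<longrightarrow> sub2 G L K \<longrightarrow> (\<forall>a\<in>carrier (tT F L).
        tnm F K H (ttr F L K a) =
          finsum (tT F H) (\<lambda>Ob. let s = crep Ob; S = sstab G H K s in
            ttr F S H (finprod (tT F S) (\<lambda>D. let g = crep D; g' = crep (s ((g <#\<^bsub>G\<^esub> K)));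
                  M = S \<inter> conjset G g' L in
               tnm F M S (tres F (conjset G g' L) M (tcj F g' L a))) (dcosets G H S K)))
          (sorbits G H K L)))"

definition tambara :: "('g,'m) monoid_scheme \<Rightarrow> ('g,'a) tdata \<Rightarrow> bool" where
  "tambara G F \<longleftrightarrow> group G \<and> finite (carrier G) \<and>
     tf_rings G F \<and> tf_res G F \<and> tf_tr G F \<and> tf_nm G F \<and> tf_cj G F \<and> tf_cj_compat G F \<and>
     tf_mackey G F \<and> tf_frob G F \<and> tf_recip_sum G F \<and> tf_recip_tr G F"

definition tideal :: "('g,'m) monoid_scheme \<Rightarrow> ('g,'a) tdata \<Rightarrow> ('g set \<Rightarrow> 'a set) \<Rightarrow> bool" where
  "tideal G F I \<longleftrightarrow>
     (\<forall>H. subgroup H G \<longrightarrow> ideal (I H) (tT F H)) \<and>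
     (\<forall>H K. sub2 G K H \<longrightarrow>
        tres F H K ` I H \<subseteq> I K \<and> ttr F K H ` I K \<subseteq> I H \<and> tnm F K H ` I K \<subseteq> I H) \<and>
     (\<forall>g H. g \<in> carrier G \<longrightarrow> subgroup H G \<longrightarrow> tcj F g H ` I H \<subseteq> I (conjset G g H))"

definition tgen :: "('g,'m) monoid_scheme \<Rightarrow> ('g,'a) tdata \<Rightarrow> ('g set \<times> 'a) set \<Rightarrow> ('g set \<Rightarrow> 'a set)" where
  "tgen G F S = (\<lambda>H. \<Inter> {I H | I. tideal G F I \<and> (\<forall>(K, z) \<in> S. z \<in> I K)})"

definition tprod :: "('g,'m) monoid_scheme \<Rightarrow> ('g,'a) tdata \<Rightarrow> ('g set \<Rightarrow> 'a set) \<Rightarrow> ('g set \<Rightarrow> 'a set) \<Rightarrow> ('g set \<Rightarrow> 'a set)" where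
  "tprod G F I J = tgen G F {(H, a \<otimes>\<^bsub>tT F H\<^esub> b) | H a b. subgroup H G \<and> a \<in> I H \<and> b \<in> J H}"

text \<open>Powers I^n for n \<ge> 1 (I^0 is taken to be the unit ideal; it is never used).\<close>
fun tpow :: "('g,'m) monoid_scheme \<Rightarrow> ('g,'a) tdata \<Rightarrow> ('g set \<Rightarrow> 'a set) \<Rightarrow> nat \<Rightarrow> ('g set \<Rightarrow> 'a set)" where
  "tpow G F I 0 = (\<lambda>H. carrier (tT F H))"
| "tpow G F I (Suc 0) = I"
| "tpow G F I (Suc (Suc n)) = tprod G F (tpow G F I (Suc n)) I"

definition tsubseteq :: "('g,'m) monoid_scheme \<Rightarrow> ('g set \<Rightarrow> 'a set) \<Rightarrow> ('g set \<Rightarrow> 'a set) \<Rightarrow> bool" where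
  "tsubseteq G I J \<longleftrightarrow> (\<forall>H. subgroup H G \<longrightarrow> I H \<subseteq> J H)"

definition trad :: "('g,'m) monoid_scheme \<Rightarrow> ('g,'a) tdata \<Rightarrow> ('g set \<Rightarrow> 'a set) \<Rightarrow> ('g set \<Rightarrow> 'a set)" where
  "trad G F I = (\<lambda>H. {x \<in> carrier (tT F H).
      \<exists>n\<ge>1. tsubseteq G (tpow G F (tgen G F {(H, x)}) n) I})"

end

theory Submission
  imports Defs
begin

lemma ideal_crit:
  fixes R (structure)
  assumes "cring R" "I \<subseteq> carrier R" "\<zero>\<^bsub>R\<^esub> \<in> I"
    "\<And>a b. a \<in> I \<Longrightarrow> b \<in> I \<Longrightarrow> a \<oplus>\<^bsub>R\<^esub> b \<in> I"
    "\<And>a x. a \<in> I \<Longrightarrow> x \<in> carrier R \<Longrightarrow> x \<otimes>\<^bsub>R\<^esub> a \<in> I"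
  shows "ideal I R"
proof -
  interpret cring R by fact
  have neg: "\<ominus> a \<in> I" if "a \<in> I" for a
  proof -
    have "a \<in> carrier R" using that assms(2) by auto
    then have "\<ominus> a = (\<ominus> \<one>) \<otimes> a" by (simp add: l_minus)
    then show ?thesis using assms(5) that by simp
  qed
  have sg: "subgroup I (add_monoid R)"
    apply (rule subgroup.intro)
    using assms(2,3,4) neg by (auto simp: a_inv_def[symmetric])
  show ?thesis
    apply (rule idealI[OF ring_axioms sg])
     apply (simp add: assms(5))
    by (metis assms(2,5) m_comm subsetD)
qed

locale tamb =
  fixes G :: "('g,'m) monoid_scheme" and F :: "('g,'a) tdata"
  assumes tamb: "tambara G F"
begin

lemma grp: "group G" and finG: "finite (carrier G)"
  using tamb by (auto simp: tambara_def)

lemma cr: "subgroup H G \<Longrightarrow> cring (tT F H)"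
  using tamb by (auto simp: tambara_def tf_rings_def)

lemma res_hom: "sub2 G K H \<Longrightarrow> tres F H K \<in> ring_hom (tT F H) (tT F K)"
  using tamb by (auto simp: tambara_def tf_res_def)
lemma res_id: "subgroup H G \<Longrightarrow> x \<in> carrier (tT F H) \<Longrightarrow> tres F H H x = x"
  using tamb by (auto simp: tambara_def tf_res_def)
lemma res_comp: "sub2 G K H \<Longrightarrow> sub2 G L K \<Longrightarrow> x \<in> carrier (tT F H) \<Longrightarrow> tres F K L (tres F H K x) = tres F H L x"
  using tamb unfolding tambara_def tf_res_def by blast

lemma tr_car: "sub2 G K H \<Longrightarrow> x \<in> carrier (tT F K) \<Longrightarrow> ttr F K H x \<in> carrier (tT F H)"
  using tamb unfolding tambara_def tf_tr_def by blast
lemma tr_add: "sub2 G K H \<Longrightarrow> x \<in> carrier (tT F K) \<Longrightarrow> y \<in> carrier (tT F K) \<Longrightarrow>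
   ttr F K H (x \<oplus>\<^bsub>tT F K\<^esub> y) = ttr F K H x \<oplus>\<^bsub>tT F H\<^esub> ttr F K H y"
  using tamb unfolding tambara_def tf_tr_def by blast

lemma nm_car: "sub2 G K H \<Longrightarrow> x \<in> carrier (tT F K) \<Longrightarrow> tnm F K H x \<in> carrier (tT F H)"
  using tamb unfolding tambara_def tf_nm_def by blast
lemma nm_mult: "sub2 G K H \<Longrightarrow> x \<in> carrier (tT F K) \<Longrightarrow> y \<in> carrier (tT F K) \<Longrightarrow>
   tnm F K H (x \<otimes>\<^bsub>tT F K\<^esub> y) = tnm F K H x \<otimes>\<^bsub>tT F H\<^esub> tnm F K H y"
  using tamb unfolding tambara_def tf_nm_def by blast
lemma nm_id: "subgroup H G \<Longrightarrow> x \<in> carrier (tT F H) \<Longrightarrow> tnm F H H x = x"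
  using tamb by (auto simp: tambara_def tf_nm_def)
lemma nm_comp: "sub2 G K H \<Longrightarrow> sub2 G L K \<Longrightarrow> x \<in> carrier (tT F L) \<Longrightarrow> tnm F K H (tnm F L K x) = tnm F L H x"
  using tamb unfolding tambara_def tf_nm_def by blast

lemma cj_hom: "g \<in> carrier G \<Longrightarrow> subgroup H G \<Longrightarrow> tcj F g H \<in> ring_hom (tT F H) (tT F (conjset G g H))"
  using tamb unfolding tambara_def tf_cj_def by blast
lemma cj_comp: "g \<in> carrier G \<Longrightarrow> g' \<in> carrier G \<Longrightarrow> subgroup H G \<Longrightarrow> x \<in> carrier (tT F H) \<Longrightarrow>
  tcj F (g \<otimes>\<^bsub>G\<^esub> g') H x = tcj F g (conjset G g' H) (tcj F g' H x)"
  using tamb unfolding tambara_def tf_cj_def by blast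
lemma cj_triv: "subgroup H G \<Longrightarrow> h \<in> H \<Longrightarrow> x \<in> carrier (tT F H) \<Longrightarrow> tcj F h H x = x"
  using tamb unfolding tambara_def tf_cj_def by blast

lemma cj_res: "g \<in> carrier G \<Longrightarrow> sub2 G K H \<Longrightarrow> x \<in> carrier (tT F H) \<Longrightarrow>
  tcj F g K (tres F H K x) = tres F (conjset G g H) (conjset G g K) (tcj F g H x)"
  using tamb unfolding tambara_def tf_cj_compat_def by blast
lemma cj_tr: "g \<in> carrier G \<Longrightarrow> sub2 G K H \<Longrightarrow> x \<in> carrier (tT F K) \<Longrightarrow>
  tcj F g H (ttr F K H x) = ttr F (conjset G g K) (conjset G g H) (tcj F g K x)"
  using tamb unfolding tambara_def tf_cj_compat_def by blast
lemma cj_nm: "g \<in> carrier G \<Longrightarrow> sub2 G K H \<Longrightarrow> x \<in> carrier (tT F K) \<Longrightarrow>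
  tcj F g H (tnm F K H x) = tnm F (conjset G g K) (conjset G g H) (tcj F g K x)"
  using tamb unfolding tambara_def tf_cj_compat_def by blast

lemma mackey_tr: "sub2 G K H \<Longrightarrow> sub2 G L H \<Longrightarrow> a \<in> carrier (tT F L) \<Longrightarrow>
        tres F H K (ttr F L H a) =
          finsum (tT F K) (\<lambda>D. let g = crep D; M = K \<inter> conjset G g L in
             ttr F M K (tres F (conjset G g L) M (tcj F g L a))) (dcosets G H K L)"
  using tamb unfolding tambara_def tf_mackey_def by blast
lemma mackey_nm: "sub2 G K H \<Longrightarrow> sub2 G L H \<Longrightarrow> a \<in> carrier (tT F L) \<Longrightarrow>
        tres F H K (tnm F L H a) =
          finprod (tT F K) (\<lambda>D. let g = crep D; M = K \<inter> conjset G g L in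
             tnm F M K (tres F (conjset G g L) M (tcj F g L a))) (dcosets G H K L)"
  using tamb unfolding tambara_def tf_mackey_def by blast
lemma frob: "sub2 G K H \<Longrightarrow> a \<in> carrier (tT F K) \<Longrightarrow> b \<in> carrier (tT F H) \<Longrightarrow>
        ttr F K H (a \<otimes>\<^bsub>tT F K\<^esub> tres F H K b) = ttr F K H a \<otimes>\<^bsub>tT F H\<^esub> b"
  using tamb unfolding tambara_def tf_frob_def by blast
lemma recip_sum: "sub2 G K H \<Longrightarrow> a \<in> carrier (tT F K) \<Longrightarrow> b \<in> carrier (tT F K) \<Longrightarrow>
        tnm F K H (a \<oplus>\<^bsub>tT F K\<^esub> b) =
          finsum (tT F H) (\<lambda>Ob. let f = crep Ob; S = bstab G H K f in
            ttr F S H (finprod (tT F S) (\<lambda>D. let g = crep D; M = S \<inter> conjset G g K in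
               tnm F M S (tres F (conjset G g K) M
                 (tcj F g K (if f ((g <#\<^bsub>G\<^esub> K)) then a else b)))) (dcosets G H S K)))
          (borbits G H K)"
  using tamb unfolding tambara_def tf_recip_sum_def by blast
lemma recip_tr: "sub2 G K H \<Longrightarrow> sub2 G L K \<Longrightarrow> a \<in> carrier (tT F L) \<Longrightarrow>
        tnm F K H (ttr F L K a) =
          finsum (tT F H) (\<lambda>Ob. let s = crep Ob; S = sstab G H K s in
            ttr F S H (finprod (tT F S) (\<lambda>D. let g = crep D; g' = crep (s ((g <#\<^bsub>G\<^esub> K)));
                  M = S \<inter> conjset G g' L in
               tnm F M S (tres F (conjset G g' L) M (tcj F g' L a))) (dcosets G H S K)))
          (sorbits G H K L)"
  using tamb unfolding tambara_def tf_recip_tr_def by blast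

end

context group
begin

lemma inv_cancel_left: "x \<in> carrier G \<Longrightarrow> y \<in> carrier G \<Longrightarrow> inv x \<otimes> (x \<otimes> y) = y"
  by (simp add: m_assoc[symmetric])
lemma inv_cancel_left2: "x \<in> carrier G \<Longrightarrow> y \<in> carrier G \<Longrightarrow> x \<otimes> (inv x \<otimes> y) = y"
  by (simp add: m_assoc[symmetric])

lemma conjset_sub: assumes g: "g \<in> carrier G" and H: "subgroup H G" shows "subgroup (conjset G g H) G"
proof (rule subgroupI)
  have Hc: "H \<subseteq> carrier G" using H subgroup.subset by blast
  show "conjset G g H \<subseteq> carrier G" using g Hc by (auto simp: conjset_def)
  show "conjset G g H \<noteq> {}" using H by (auto simp: conjset_def subgroup_nonempty)
  show "inv a \<in> conjset G g H" if aa: "a \<in> conjset G g H" for a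
  proof -
    obtain h where h: "h \<in> H" "a = g \<otimes> h \<otimes> inv g" using aa unfolding conjset_def by blast
    have hc: "h \<in> carrier G" using h Hc by auto
    have "inv a = g \<otimes> inv h \<otimes> inv g" using g hc h(2) by (simp add: inv_mult_group m_assoc)
    then show ?thesis using h H by (auto simp: conjset_def subgroup.m_inv_closed)
  qed
  show "a \<otimes> b \<in> conjset G g H" if aa: "a \<in> conjset G g H" "b \<in> conjset G g H" for a b
  proof -
    obtain h where h: "h \<in> H" "a = g \<otimes> h \<otimes> inv g" using aa unfolding conjset_def by blast
    obtain k where k: "k \<in> H" "b = g \<otimes> k \<otimes> inv g" using aa unfolding conjset_def by blast
    have hc: "h \<in> carrier G" "k \<in> carrier G" using h k Hc by auto
    have "a \<otimes> b = g \<otimes> (h \<otimes> k) \<otimes> inv g" using g hc h(2) k(2) by (simp add: m_assoc inv_cancel_left)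
    then show ?thesis using h k H by (auto simp: conjset_def subgroup.m_closed)
  qed
qed

lemma conjset_comp: "g \<in> carrier G \<Longrightarrow> h \<in> carrier G \<Longrightarrow> H \<subseteq> carrier G \<Longrightarrow>
   conjset G g (conjset G h H) = conjset G (g \<otimes> h) H"
  unfolding conjset_def image_image
  by (rule image_cong, simp, simp add: m_assoc inv_mult_group subset_iff)

lemma conjset_one: "H \<subseteq> carrier G \<Longrightarrow> conjset G \<one> H = H"
  unfolding conjset_def by (auto simp: subset_iff)

lemma conjset_self: "subgroup H G \<Longrightarrow> g \<in> H \<Longrightarrow> conjset G g H = H"
proof -
  assume H: "subgroup H G" and g: "g \<in> H"
  have Hc: "H \<subseteq> carrier G" using H subgroup.subset by blast
  have gc: "g \<in> carrier G" using g Hc by auto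
  show ?thesis
  proof
    show "conjset G g H \<subseteq> H" using H g
      by (auto simp: conjset_def subgroup.m_closed subgroup.m_inv_closed)
    show "H \<subseteq> conjset G g H"
    proof
      fix x assume x: "x \<in> H"
      have xc: "x \<in> carrier G" using x Hc by auto
      have "x = g \<otimes> (inv g \<otimes> x \<otimes> g) \<otimes> inv g" using gc xc by (simp add: m_assoc inv_cancel_left2)
      moreover have "inv g \<otimes> x \<otimes> g \<in> H" using H g x by (simp add: subgroup.m_closed subgroup.m_inv_closed)
      ultimately show "x \<in> conjset G g H" unfolding conjset_def by blast
    qed
  qed
qed

lemma conjset_mono: "K \<subseteq> H \<Longrightarrow> conjset G g K \<subseteq> conjset G g H"
  unfolding conjset_def by auto

lemma conjset_sub2: "g \<in> carrier G \<Longrightarrow> sub2 G K H \<Longrightarrow> sub2 G (conjset G g K) (conjset G g H)"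
  unfolding sub2_def using conjset_sub conjset_mono by blast

lemma dcosets_fin: "finite (carrier G) \<Longrightarrow> H \<subseteq> carrier G \<Longrightarrow> finite (dcosets G H K L)"
  unfolding dcosets_def using finite_subset by blast

lemma dcosets_ne: "subgroup H G \<Longrightarrow> dcosets G H K L \<noteq> {}"
  unfolding dcosets_def using subgroup_nonempty by fastforce

lemma crep_dc:
  assumes "subgroup H G" "subgroup K G" "subgroup L G" "K \<subseteq> H" "L \<subseteq> H" "D \<in> dcosets G H K L"
  shows "crep D \<in> H"
proof -
  obtain g where g: "g \<in> H" "D = dcoset G K g L" using assms(6) by (auto simp: dcosets_def)
  have gc: "g \<in> carrier G" using g assms(1) subgroup.subset by blast
  have "g \<in> D" unfolding g dcoset_def
    by (rule CollectI, rule exI[of _ \<one>], rule exI[of _ \<one>], simp add: gc assms(2,3) subgroup.one_closed)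
  then have "crep D \<in> D" unfolding crep_def by (rule someI)
  then obtain k l where "k \<in> K" "l \<in> L" "crep D = k \<otimes> g \<otimes> l" unfolding g dcoset_def by blast
  then show ?thesis using g assms subgroup.m_closed by (metis subsetD)
qed

lemma lcos_closed:
  assumes "subgroup K G" "subgroup H G" "h \<in> H" "C \<in> lcos G H K"
  shows "h <#\<^bsub>G\<^esub> C \<in> lcos G H K"
proof -
  obtain k where k: "k \<in> H" "C = k <#\<^bsub>G\<^esub> K" using assms(4) unfolding lcos_def by (rule imageE) simp
  have Hc: "H \<subseteq> carrier G" using assms(2) subgroup.subset by blast
  have hk: "h \<in> carrier G" "k \<in> carrier G" using k(1) assms(3) Hc by auto
  have Ks: "K \<subseteq> carrier G" using assms(1) subgroup.subset by blast
  have e: "h <#\<^bsub>G\<^esub> C = (h \<otimes> k) <#\<^bsub>G\<^esub> K" unfolding k(2) by (rule lcos_m_assoc[OF Ks hk])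
  have m: "h \<otimes> k \<in> H" using assms(2,3) k(1) by (rule subgroup.m_closed)
  show ?thesis unfolding lcos_def by (rule image_eqI[where f="\<lambda>h. h <#\<^bsub>G\<^esub> K", OF e m])
qed

lemma lcos_sub: assumes "subgroup K G" "subgroup H G" "C \<in> lcos G H K" shows "C \<subseteq> carrier G"
proof -
  obtain k where k: "k \<in> H" "C = k <#\<^bsub>G\<^esub> K" using assms(3) unfolding lcos_def by (rule imageE) simp
  have "k \<in> carrier G" using k(1) assms(2) subgroup.subset by blast
  moreover have "K \<subseteq> carrier G" using assms(1) subgroup.subset by blast
  ultimately show ?thesis unfolding k(2) by (rule l_coset_subset_G[rotated])
qed

lemma bact_comp:
  assumes "subgroup K G" "subgroup H G" "h1 \<in> H" "h2 \<in> H"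
  shows "bact G H K h1 (bact G H K h2 f) = bact G H K (h1 \<otimes> h2) f"
proof
  fix C
  have Hc: "H \<subseteq> carrier G" using assms(2) subgroup.subset by blast
  have h: "h1 \<in> carrier G" "h2 \<in> carrier G" using assms Hc by auto
  show "bact G H K h1 (bact G H K h2 f) C = bact G H K (h1 \<otimes> h2) f C"
  proof (cases "C \<in> lcos G H K")
    case True
    have i1: "inv h1 \<in> H" by (rule subgroup.m_inv_closed[OF assms(2) assms(3)])
    have c1: "inv h1 <#\<^bsub>G\<^esub> C \<in> lcos G H K" by (rule lcos_closed[OF assms(1,2) i1 True])
    have Cs: "C \<subseteq> carrier G" by (rule lcos_sub[OF assms(1,2) True])
    have e: "inv h2 <#\<^bsub>G\<^esub> (inv h1 <#\<^bsub>G\<^esub> C) = inv (h1 \<otimes> h2) <#\<^bsub>G\<^esub> C"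
      using lcos_m_assoc[OF Cs, of "inv h2" "inv h1"] h by (simp add: inv_mult_group)
    show ?thesis using True c1 e by (simp add: bact_def)
  qed (simp add: bact_def)
qed

lemma bact_one:
  assumes "f \<in> extensional (lcos G H K)" "subgroup K G" "subgroup H G"
  shows "bact G H K \<one> f = f"
proof
  fix C show "bact G H K \<one> f C = f C"
  proof (cases "C \<in> lcos G H K")
    case True
    have "C \<subseteq> carrier G" by (rule lcos_sub[OF assms(2,3) True])
    then show ?thesis using True by (simp add: bact_def lcos_mult_one)
  next
    case False
    then show ?thesis using assms(1) by (simp add: bact_def extensional_def)
  qed
qed

lemma bstab_sub:
  assumes "subgroup K G" "subgroup H G" "f \<in> extensional (lcos G H K)"
  shows "subgroup (bstab G H K f) G" "bstab G H K f \<subseteq> H"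
proof -
  have Hc: "H \<subseteq> carrier G" using assms(2) subgroup.subset by blast
  show "bstab G H K f \<subseteq> H" by (auto simp: bstab_def)
  show "subgroup (bstab G H K f) G"
  proof (rule subgroupI)
    show "bstab G H K f \<subseteq> carrier G" using Hc by (auto simp: bstab_def)
    have "\<one> \<in> bstab G H K f" using bact_one[OF assms(3,1,2)] subgroup.one_closed[OF assms(2)]
      by (simp add: bstab_def)
    then show "bstab G H K f \<noteq> {}" by (rule ex_in_conv[THEN iffD1, OF exI])
    show "inv a \<in> bstab G H K f" if aa: "a \<in> bstab G H K f" for a
    proof -
      have a: "a \<in> H" "bact G H K a f = f" using aa by (auto simp: bstab_def)
      have ia: "inv a \<in> H" by (rule subgroup.m_inv_closed[OF assms(2) a(1)])
      have ac: "a \<in> carrier G" using a(1) Hc by auto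
      have "bact G H K (inv a) f = bact G H K (inv a) (bact G H K a f)" using a by simp
      also have "\<dots> = bact G H K (inv a \<otimes> a) f" by (rule bact_comp[OF assms(1,2) ia a(1)])
      also have "\<dots> = f" using ac bact_one[OF assms(3,1,2)] by simp
      finally show ?thesis using ia by (simp add: bstab_def)
    qed
    show "a \<otimes> b \<in> bstab G H K f" if aa: "a \<in> bstab G H K f" "b \<in> bstab G H K f" for a b
    proof -
      have a: "a \<in> H" "bact G H K a f = f" "b \<in> H" "bact G H K b f = f" using aa by (auto simp: bstab_def)
      have "bact G H K (a \<otimes> b) f = bact G H K a (bact G H K b f)" by (rule bact_comp[OF assms(1,2) a(1) a(3), symmetric])
      also have "\<dots> = f" using a by simp
      finally show ?thesis using subgroup.m_closed[OF assms(2) a(1) a(3)] by (simp add: bstab_def)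
    qed
  qed
qed

lemma bact_ext: "bact G H K h f \<in> extensional (lcos G H K)"
  by (simp add: bact_def)

lemma borbit_crep:
  assumes "subgroup H G" "Ob \<in> borbits G H K"
  shows "crep Ob \<in> extensional (lcos G H K)"
proof -
  obtain f0 where Ob: "Ob = (\<lambda>h. bact G H K h f0) ` H" using assms(2) unfolding borbits_def by (rule imageE) simp
  have "\<one> \<in> H" by (rule subgroup.one_closed[OF assms(1)])
  then have "bact G H K \<one> f0 \<in> Ob" unfolding Ob by (rule imageI)
  then have "crep Ob \<in> Ob" unfolding crep_def by (rule someI[of "\<lambda>x. x \<in> Ob"])
  then obtain h where "crep Ob = bact G H K h f0" unfolding Ob by (rule imageE) simp
  then show ?thesis using bact_ext by simp
qed

lemma bstab_crep:
  assumes "subgroup K G" "subgroup H G" "Ob \<in> borbits G H K"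
  shows "subgroup (bstab G H K (crep Ob)) G" "bstab G H K (crep Ob) \<subseteq> H"
  using bstab_sub[OF assms(1,2) borbit_crep[OF assms(2,3)]] by auto

lemma sact_comp:
  assumes "subgroup K G" "subgroup H G" "h1 \<in> H" "h2 \<in> H" "\<forall>C\<in>lcos G H K. s C \<subseteq> carrier G"
  shows "sact G H K h1 (sact G H K h2 s) = sact G H K (h1 \<otimes> h2) s"
proof
  fix C
  have Hc: "H \<subseteq> carrier G" using assms(2) subgroup.subset by blast
  have h: "h1 \<in> carrier G" "h2 \<in> carrier G" using assms Hc by auto
  show "sact G H K h1 (sact G H K h2 s) C = sact G H K (h1 \<otimes> h2) s C"
  proof (cases "C \<in> lcos G H K")
    case True
    have i1: "inv h1 \<in> H" by (rule subgroup.m_inv_closed[OF assms(2) assms(3)])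
    have i2: "inv h2 \<in> H" by (rule subgroup.m_inv_closed[OF assms(2) assms(4)])
    have c1: "inv h1 <#\<^bsub>G\<^esub> C \<in> lcos G H K" by (rule lcos_closed[OF assms(1,2) i1 True])
    have c2: "inv h2 <#\<^bsub>G\<^esub> (inv h1 <#\<^bsub>G\<^esub> C) \<in> lcos G H K" by (rule lcos_closed[OF assms(1,2) i2 c1])
    have Cs: "C \<subseteq> carrier G" by (rule lcos_sub[OF assms(1,2) True])
    have e: "inv h2 <#\<^bsub>G\<^esub> (inv h1 <#\<^bsub>G\<^esub> C) = inv (h1 \<otimes> h2) <#\<^bsub>G\<^esub> C"
      using lcos_m_assoc[OF Cs, of "inv h2" "inv h1"] h by (simp add: inv_mult_group)
    have Xs: "s (inv h2 <#\<^bsub>G\<^esub> (inv h1 <#\<^bsub>G\<^esub> C)) \<subseteq> carrier G" using assms(5) c2 by blast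
    have e2: "h1 <#\<^bsub>G\<^esub> (h2 <#\<^bsub>G\<^esub> s (inv h2 <#\<^bsub>G\<^esub> (inv h1 <#\<^bsub>G\<^esub> C))) = (h1 \<otimes> h2) <#\<^bsub>G\<^esub> s (inv h2 <#\<^bsub>G\<^esub> (inv h1 <#\<^bsub>G\<^esub> C))"
      by (rule lcos_m_assoc[OF Xs h])
    show ?thesis using True c1 e e2 by (simp add: sact_def)
  qed (simp add: sact_def)
qed

lemma sact_one:
  assumes "s \<in> extensional (lcos G H K)" "subgroup K G" "subgroup H G" "\<forall>C\<in>lcos G H K. s C \<subseteq> carrier G"
  shows "sact G H K \<one> s = s"
proof
  fix C show "sact G H K \<one> s C = s C"
  proof (cases "C \<in> lcos G H K")
    case True
    have "C \<subseteq> carrier G" by (rule lcos_sub[OF assms(2,3) True])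
    moreover have "s C \<subseteq> carrier G" using assms(4) True by blast
    ultimately show ?thesis using True by (simp add: sact_def lcos_mult_one)
  next
    case False
    then show ?thesis using assms(1) by (simp add: sact_def extensional_def)
  qed
qed

lemma sstab_sub:
  assumes "subgroup K G" "subgroup H G" "s \<in> extensional (lcos G H K)" "\<forall>C\<in>lcos G H K. s C \<subseteq> carrier G"
  shows "subgroup (sstab G H K s) G" "sstab G H K s \<subseteq> H"
proof -
  have Hc: "H \<subseteq> carrier G" using assms(2) subgroup.subset by blast
  show "sstab G H K s \<subseteq> H" by (auto simp: sstab_def)
  show "subgroup (sstab G H K s) G"
  proof (rule subgroupI)
    show "sstab G H K s \<subseteq> carrier G" using Hc by (auto simp: sstab_def)
    have "\<one> \<in> sstab G H K s" using sact_one[OF assms(3,1,2,4)] subgroup.one_closed[OF assms(2)]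
      by (simp add: sstab_def)
    then show "sstab G H K s \<noteq> {}" by (rule ex_in_conv[THEN iffD1, OF exI])
    show "inv a \<in> sstab G H K s" if aa: "a \<in> sstab G H K s" for a
    proof -
      have a: "a \<in> H" "sact G H K a s = s" using aa by (auto simp: sstab_def)
      have ia: "inv a \<in> H" by (rule subgroup.m_inv_closed[OF assms(2) a(1)])
      have ac: "a \<in> carrier G" using a(1) Hc by auto
      have "sact G H K (inv a) s = sact G H K (inv a) (sact G H K a s)" using a by simp
      also have "\<dots> = sact G H K (inv a \<otimes> a) s" by (rule sact_comp[OF assms(1,2) ia a(1) assms(4)])
      also have "\<dots> = s" using ac sact_one[OF assms(3,1,2,4)] by simp
      finally show ?thesis using ia by (simp add: sstab_def)
    qed
    show "a \<otimes> b \<in> sstab G H K s" if aa: "a \<in> sstab G H K s" "b \<in> sstab G H K s" for a b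
    proof -
      have a: "a \<in> H" "sact G H K a s = s" "b \<in> H" "sact G H K b s = s" using aa by (auto simp: sstab_def)
      have "sact G H K (a \<otimes> b) s = sact G H K a (sact G H K b s)" by (rule sact_comp[OF assms(1,2) a(1) a(3) assms(4), symmetric])
      also have "\<dots> = s" using a by simp
      finally show ?thesis using subgroup.m_closed[OF assms(2) a(1) a(3)] by (simp add: sstab_def)
    qed
  qed
qed

lemma lcos_mem: "g \<in> H \<Longrightarrow> g <#\<^bsub>G\<^esub> K \<in> lcos G H K"
  unfolding lcos_def by (rule imageI)

lemma sorbit_crep:
  assumes "subgroup H G" "Ob \<in> sorbits G H K L"
  shows "\<exists>h0\<in>H. \<exists>s0\<in>secs G H K L. crep Ob = sact G H K h0 s0"
proof -
  obtain s0 where s0: "s0 \<in> secs G H K L" "Ob = (\<lambda>h. sact G H K h s0) ` H"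
    using assms(2) unfolding sorbits_def by (rule imageE) simp
  have "\<one> \<in> H" by (rule subgroup.one_closed[OF assms(1)])
  then have "sact G H K \<one> s0 \<in> Ob" unfolding s0(2) by (rule imageI)
  then have "crep Ob \<in> Ob" unfolding crep_def by (rule someI[of "\<lambda>x. x \<in> Ob"])
  then obtain h where "h \<in> H" "crep Ob = sact G H K h s0" unfolding s0(2) by (rule imageE) simp
  then show ?thesis using s0(1) by blast
qed

lemma secs_props:
  assumes "subgroup K G" "subgroup H G" "subgroup L G" "h0 \<in> H" "s0 \<in> secs G H K L"
  shows "sact G H K h0 s0 \<in> extensional (lcos G H K)"
    "\<forall>C\<in>lcos G H K. sact G H K h0 s0 C \<subseteq> carrier G"
    "\<And>g. g \<in> H \<Longrightarrow> \<exists>k\<in>H. sact G H K h0 s0 (g <#\<^bsub>G\<^esub> K) = k <#\<^bsub>G\<^esub> L"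
proof -
  have Hc: "H \<subseteq> carrier G" using assms(2) subgroup.subset by blast
  have Lc: "L \<subseteq> carrier G" using assms(3) subgroup.subset by blast
  have h0c: "h0 \<in> carrier G" using assms(4) Hc by auto
  show "sact G H K h0 s0 \<in> extensional (lcos G H K)" by (simp add: sact_def)
  have i0: "inv h0 \<in> H" by (rule subgroup.m_inv_closed[OF assms(2) assms(4)])
  have key: "\<exists>k\<in>H. sact G H K h0 s0 C = k <#\<^bsub>G\<^esub> L" if C: "C \<in> lcos G H K" for C
  proof -
    have c1: "inv h0 <#\<^bsub>G\<^esub> C \<in> lcos G H K" by (rule lcos_closed[OF assms(1,2) i0 C])
    then have "s0 (inv h0 <#\<^bsub>G\<^esub> C) \<in> lcos G H L" using assms(5) unfolding secs_def by blast
    then obtain k where k: "k \<in> H" "s0 (inv h0 <#\<^bsub>G\<^esub> C) = k <#\<^bsub>G\<^esub> L" unfolding lcos_def by (rule imageE) simp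
    have kc: "k \<in> carrier G" using k(1) Hc by auto
    have "sact G H K h0 s0 C = h0 <#\<^bsub>G\<^esub> (k <#\<^bsub>G\<^esub> L)" using C k(2) by (simp add: sact_def)
    also have "\<dots> = (h0 \<otimes> k) <#\<^bsub>G\<^esub> L" by (rule lcos_m_assoc[OF Lc h0c kc])
    finally show ?thesis using subgroup.m_closed[OF assms(2) assms(4) k(1)] by blast
  qed
  show "\<forall>C\<in>lcos G H K. sact G H K h0 s0 C \<subseteq> carrier G"
  proof
    fix C assume C: "C \<in> lcos G H K"
    obtain k where "k \<in> H" "sact G H K h0 s0 C = k <#\<^bsub>G\<^esub> L" using key[OF C] by blast
    then show "sact G H K h0 s0 C \<subseteq> carrier G" using Hc Lc l_coset_subset_G by (metis subsetD)
  qed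
  show "\<exists>k\<in>H. sact G H K h0 s0 (g <#\<^bsub>G\<^esub> K) = k <#\<^bsub>G\<^esub> L" if "g \<in> H" for g
    using key[OF lcos_mem[OF that]] .
qed

lemma crep_lcos:
  assumes "subgroup L G" "subgroup H G" "L \<subseteq> H" "k \<in> H"
  shows "crep (k <#\<^bsub>G\<^esub> L) \<in> H"
proof -
  have kc: "k \<in> carrier G" using assms(2,4) subgroup.subset by blast
  have "k \<otimes> \<one> \<in> k <#\<^bsub>G\<^esub> L" unfolding l_coset_def using subgroup.one_closed[OF assms(1)] by blast
  then have "crep (k <#\<^bsub>G\<^esub> L) \<in> k <#\<^bsub>G\<^esub> L" unfolding crep_def by (rule someI[of "\<lambda>x. x \<in> k <#\<^bsub>G\<^esub> L"])
  then obtain l where "l \<in> L" "crep (k <#\<^bsub>G\<^esub> L) = k \<otimes> l" unfolding l_coset_def by blast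
  then show ?thesis using assms subgroup.m_closed by (metis subsetD)
qed

lemma sorbit_facts:
  assumes "subgroup K G" "subgroup H G" "subgroup L G" "L \<subseteq> H" "Ob \<in> sorbits G H K L"
  shows "subgroup (sstab G H K (crep Ob)) G" "sstab G H K (crep Ob) \<subseteq> H"
    "\<And>g. g \<in> H \<Longrightarrow> crep (crep Ob (g <#\<^bsub>G\<^esub> K)) \<in> H"
proof -
  obtain h0 s0 where hs: "h0 \<in> H" "s0 \<in> secs G H K L" "crep Ob = sact G H K h0 s0"
    using sorbit_crep[OF assms(2,5)] by blast
  note p = secs_props[OF assms(1,2,3) hs(1,2)]
  show "subgroup (sstab G H K (crep Ob)) G" "sstab G H K (crep Ob) \<subseteq> H"
    using sstab_sub[OF assms(1,2) p(1) p(2)] hs(3) by auto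
  show "crep (crep Ob (g <#\<^bsub>G\<^esub> K)) \<in> H" if gH: "g \<in> H" for g
  proof -
    obtain k where "k \<in> H" "crep Ob (g <#\<^bsub>G\<^esub> K) = k <#\<^bsub>G\<^esub> L" using p(3)[OF gH] hs(3) by auto
    then show ?thesis using crep_lcos[OF assms(3,2,4)] by simp
  qed
qed

end

lemma id_sub: "ideal I R \<Longrightarrow> I \<subseteq> carrier R"
  by (simp add: ideal_def additive_subgroup.a_subset)
lemma id_zero: "ideal I R \<Longrightarrow> \<zero>\<^bsub>R\<^esub> \<in> I"
  by (simp add: ideal_def additive_subgroup.zero_closed)
lemma id_add: "ideal I R \<Longrightarrow> a \<in> I \<Longrightarrow> b \<in> I \<Longrightarrow> a \<oplus>\<^bsub>R\<^esub> b \<in> I"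
  by (simp add: ideal_def additive_subgroup.a_closed)
lemma id_lm: "ideal I R \<Longrightarrow> a \<in> I \<Longrightarrow> x \<in> carrier R \<Longrightarrow> x \<otimes>\<^bsub>R\<^esub> a \<in> I"
  by (rule ideal.I_l_closed)
lemma id_rm: "ideal I R \<Longrightarrow> a \<in> I \<Longrightarrow> x \<in> carrier R \<Longrightarrow> a \<otimes>\<^bsub>R\<^esub> x \<in> I"
  by (rule ideal.I_r_closed)
lemma finsum_ideal:
  fixes R (structure)
  assumes "cring R" "ideal I R" "\<And>x. x \<in> A \<Longrightarrow> f x \<in> I"
  shows "finsum R f A \<in> I"
proof (cases "finite A")
  case False
  interpret cring R by fact
  show ?thesis using False id_zero[OF assms(2)] by (simp add: finsum_infinite)
next
  case True
  interpret cring R by fact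
  have fc: "f x \<in> carrier R" if "x \<in> A" for x using assms(3)[OF that] id_sub[OF assms(2)] by blast
  from True assms(3) fc show ?thesis
  proof (induction A rule: finite_induct)
    case empty
    then show ?case using id_zero[OF assms(2)] by simp
  next
    case (insert a A)
    have "finsum R f (insert a A) = f a \<oplus> finsum R f A"
      using insert by (intro finsum_insert) auto
    then show ?case using insert id_add[OF assms(2)] by simp
  qed
qed

lemma finprod_ideal:
  fixes R (structure)
  assumes "cring R" "ideal I R" "finite A" "a \<in> A" "f a \<in> I" "f \<in> A \<rightarrow> carrier R"
  shows "finprod R f A \<in> I"
proof -
  interpret cring R by fact
  have A: "A = insert a (A - {a})" using assms(4) by blast
  have "finprod R f A = f a \<otimes> finprod R f (A - {a})"
    by (subst A, rule finprod_insert) (use assms in auto)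
  moreover have "finprod R f (A - {a}) \<in> carrier R" using assms(6) by (intro finprod_closed) auto
  ultimately show ?thesis using id_rm[OF assms(2) assms(5)] by simp
qed

lemma finprod_split:
  fixes R (structure)
  assumes "cring R" "finite A" "a \<in> A" "f \<in> A \<rightarrow> carrier R"
  shows "finprod R f A = f a \<otimes>\<^bsub>R\<^esub> finprod R f (A - {a})" "finprod R f (A - {a}) \<in> carrier R"
proof -
  interpret cring R by fact
  have A: "A = insert a (A - {a})" using assms(3) by blast
  show "finprod R f A = f a \<otimes> finprod R f (A - {a})"
    by (subst A, rule finprod_insert) (use assms in auto)
  show "finprod R f (A - {a}) \<in> carrier R" using assms(4) by (intro finprod_closed) auto
qed

sublocale tamb \<subseteq> GG: group G by (rule grp)

context tamb
begin

lemma sg_sub: "subgroup H G \<Longrightarrow> H \<subseteq> carrier G"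
  using subgroup.subset by blast

lemma tideal_id: "tideal G F I \<Longrightarrow> subgroup H G \<Longrightarrow> ideal (I H) (tT F H)"
  by (simp add: tideal_def)
lemma tideal_car: "tideal G F I \<Longrightarrow> subgroup H G \<Longrightarrow> x \<in> I H \<Longrightarrow> x \<in> carrier (tT F H)"
  using id_sub[OF tideal_id] by (meson subsetD)
lemma tideal_res: "tideal G F I \<Longrightarrow> sub2 G K H \<Longrightarrow> x \<in> I H \<Longrightarrow> tres F H K x \<in> I K"
  by (simp add: tideal_def image_subset_iff)
lemma tideal_tr: "tideal G F I \<Longrightarrow> sub2 G K H \<Longrightarrow> x \<in> I K \<Longrightarrow> ttr F K H x \<in> I H"
  by (simp add: tideal_def image_subset_iff)
lemma tideal_nm: "tideal G F I \<Longrightarrow> sub2 G K H \<Longrightarrow> x \<in> I K \<Longrightarrow> tnm F K H x \<in> I H"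
  by (simp add: tideal_def image_subset_iff)
lemma tideal_cj: "tideal G F I \<Longrightarrow> g \<in> carrier G \<Longrightarrow> subgroup H G \<Longrightarrow> x \<in> I H \<Longrightarrow> tcj F g H x \<in> I (conjset G g H)"
  by (simp add: tideal_def image_subset_iff)

lemma res_car: "sub2 G K H \<Longrightarrow> x \<in> carrier (tT F H) \<Longrightarrow> tres F H K x \<in> carrier (tT F K)"
  by (rule ring_hom_closed[OF res_hom])
lemma cj_car: "g \<in> carrier G \<Longrightarrow> subgroup H G \<Longrightarrow> x \<in> carrier (tT F H) \<Longrightarrow> tcj F g H x \<in> carrier (tT F (conjset G g H))"
  by (rule ring_hom_closed[OF cj_hom])

lemma full_tideal: "tideal G F (\<lambda>H. if subgroup H G then carrier (tT F H) else UNIV)"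
  unfolding tideal_def
proof (intro conjI allI impI)
  fix H assume "subgroup H G"
  then show "ideal (if subgroup H G then carrier (tT F H) else UNIV) (tT F H)"
    using cr[of H] by (simp add: cring.axioms(1) ring.oneideal)
next
  fix H K assume s: "sub2 G K H"
  then have "subgroup K G" "subgroup H G" by (auto simp: sub2_def)
  then show "tres F H K ` (if subgroup H G then carrier (tT F H) else UNIV) \<subseteq> (if subgroup K G then carrier (tT F K) else UNIV)"
    "ttr F K H ` (if subgroup K G then carrier (tT F K) else UNIV) \<subseteq> (if subgroup H G then carrier (tT F H) else UNIV)"
    "tnm F K H ` (if subgroup K G then carrier (tT F K) else UNIV) \<subseteq> (if subgroup H G then carrier (tT F H) else UNIV)"
    using s res_car tr_car nm_car by auto
next
  fix g H assume "g \<in> carrier G" "subgroup H G"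
  then show "tcj F g H ` (if subgroup H G then carrier (tT F H) else UNIV) \<subseteq> (if subgroup (conjset G g H) G then carrier (tT F (conjset G g H)) else UNIV)"
    using cj_car by auto
qed


definition okgen :: "('g set \<times> 'a) set \<Rightarrow> bool" where
  "okgen S \<longleftrightarrow> (\<forall>(K, z) \<in> S. subgroup K G \<and> z \<in> carrier (tT F K))"

lemma img_Inter: "(\<And>I. I \<in> Fam \<Longrightarrow> \<phi> ` I H \<subseteq> I K) \<Longrightarrow> \<phi> ` (\<Inter>I\<in>Fam. I H) \<subseteq> (\<Inter>I\<in>Fam. I K)"
  by blast

lemma tgen_tideal:
  assumes "okgen S"
  shows "tideal G F (tgen G F S)"
proof -
  define Fam where "Fam = {I. tideal G F I \<and> (\<forall>(K, z) \<in> S. z \<in> I K)}"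
  have full: "(\<lambda>H. if subgroup H G then carrier (tT F H) else UNIV) \<in> Fam"
    using full_tideal assms unfolding okgen_def Fam_def by auto
  have eq: "tgen G F S H = (\<Inter>I\<in>Fam. I H)" for H
    unfolding tgen_def Fam_def by auto
  have tid: "tideal G F I" if "I \<in> Fam" for I using that unfolding Fam_def by simp
  show ?thesis
    unfolding tideal_def
  proof (intro conjI allI impI)
    fix H assume H: "subgroup H G"
    interpret cring "tT F H" using cr[OF H] .
    have "ideal (\<Inter>((\<lambda>I. I H) ` Fam)) (tT F H)"
    proof (rule i_Intersect)
      show "(\<lambda>I. I H) ` Fam \<noteq> {}" using full by auto
      show "ideal J (tT F H)" if "J \<in> (\<lambda>I. I H) ` Fam" for J
        using that tid tideal_id[OF _ H] by auto
    qed
    then show "ideal (tgen G F S H) (tT F H)" using eq by simp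
  next
    fix H K assume s: "sub2 G K H"
    show "tres F H K ` tgen G F S H \<subseteq> tgen G F S K" unfolding eq
      by (rule img_Inter) (use s tid tideal_res in \<open>auto simp: image_subset_iff\<close>)
    show "ttr F K H ` tgen G F S K \<subseteq> tgen G F S H" unfolding eq
      by (rule img_Inter) (use s tid tideal_tr in \<open>auto simp: image_subset_iff\<close>)
    show "tnm F K H ` tgen G F S K \<subseteq> tgen G F S H" unfolding eq
      by (rule img_Inter) (use s tid tideal_nm in \<open>auto simp: image_subset_iff\<close>)
  next
    fix g H assume gH: "g \<in> carrier G" "subgroup H G"
    show "tcj F g H ` tgen G F S H \<subseteq> tgen G F S (conjset G g H)" unfolding eq
      by (rule img_Inter) (use gH tid tideal_cj in \<open>auto simp: image_subset_iff\<close>)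
  qed
qed

lemma tgen_gen: "(K, z) \<in> S \<Longrightarrow> z \<in> tgen G F S K"
  unfolding tgen_def by auto

lemma tgen_min:
  assumes "tideal G F I" "\<And>K z. (K, z) \<in> S \<Longrightarrow> z \<in> I K"
  shows "tgen G F S H \<subseteq> I H"
proof -
  have "\<forall>(K, z) \<in> S. z \<in> I K" using assms(2) by auto
  then have "I H \<in> {J H | J. tideal G F J \<and> (\<forall>(K, z) \<in> S. z \<in> J K)}" using assms(1) by auto
  then show ?thesis unfolding tgen_def by (rule Inter_lower)
qed

lemma tgen_mono: "S \<subseteq> S' \<Longrightarrow> tgen G F S H \<subseteq> tgen G F S' H"
  unfolding tgen_def by blast

end

lemma colon_ideal:
  fixes R (structure)
  assumes "cring R" "ideal Z R" "s \<in> carrier R"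
  shows "ideal {t \<in> carrier R. s \<otimes> t \<in> Z} R"
proof -
  interpret cring R by fact
  show ?thesis
  proof (rule ideal_crit[OF assms(1)])
    show "{t \<in> carrier R. s \<otimes> t \<in> Z} \<subseteq> carrier R" by auto
    show "\<zero> \<in> {t \<in> carrier R. s \<otimes> t \<in> Z}" using assms id_zero by simp
    show "a \<oplus> b \<in> {t \<in> carrier R. s \<otimes> t \<in> Z}" if "a \<in> {t \<in> carrier R. s \<otimes> t \<in> Z}" "b \<in> {t \<in> carrier R. s \<otimes> t \<in> Z}" for a b
      using that assms id_add[OF assms(2)] by (simp add: r_distr)
    show "x \<otimes> a \<in> {t \<in> carrier R. s \<otimes> t \<in> Z}" if "a \<in> {t \<in> carrier R. s \<otimes> t \<in> Z}" "x \<in> carrier R" for a x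
    proof -
      have "s \<otimes> (x \<otimes> a) = x \<otimes> (s \<otimes> a)" using that assms by (simp add: m_lcomm)
      then show ?thesis using that id_lm[OF assms(2)] by simp
    qed
  qed
qed

context tamb
begin

lemma sub2_sg: "sub2 G K H \<Longrightarrow> subgroup K G" "sub2 G K H \<Longrightarrow> subgroup H G" "sub2 G K H \<Longrightarrow> K \<subseteq> H"
  by (auto simp: sub2_def)

definition goodN :: "('g set \<Rightarrow> 'a set) \<Rightarrow> ('g set \<Rightarrow> 'a set) \<Rightarrow> 'g set \<Rightarrow> 'g set \<Rightarrow> 'a \<Rightarrow> bool" where
  "goodN S Z M B v \<longleftrightarrow> (\<forall>s\<in>S M. s \<otimes>\<^bsub>tT F M\<^esub> tnm F B M v \<in> Z M)"

definition Col :: "('g set \<Rightarrow> 'a set) \<Rightarrow> ('g set \<Rightarrow> 'a set) \<Rightarrow> 'g set \<Rightarrow> 'a set" where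
  "Col S Z L = {u \<in> carrier (tT F L). \<forall>g M B. g \<in> carrier G \<longrightarrow> subgroup M G \<longrightarrow> subgroup B G \<longrightarrow>
      B \<subseteq> M \<longrightarrow> B \<subseteq> conjset G g L \<longrightarrow> goodN S Z M B (tres F (conjset G g L) B (tcj F g L u))}"

definition Sdiv :: "('g set \<Rightarrow> 'a set) \<Rightarrow> bool" where
  "Sdiv S \<longleftrightarrow> (\<forall>M. subgroup M G \<longrightarrow> S M \<subseteq> carrier (tT F M)) \<and>
     (\<forall>M K s. sub2 G K M \<longrightarrow> s \<in> S M \<longrightarrow> (\<exists>r\<in>carrier (tT F K). \<exists>s'\<in>S K. tres F M K s = r \<otimes>\<^bsub>tT F K\<^esub> s'))"

lemma Sdiv_car: "Sdiv S \<Longrightarrow> subgroup M G \<Longrightarrow> s \<in> S M \<Longrightarrow> s \<in> carrier (tT F M)"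
  unfolding Sdiv_def by blast

lemma Sdiv_use:
  assumes "Sdiv S" "tideal G F Z" "sub2 G K M" "s \<in> S M" "x \<in> carrier (tT F K)"
    "\<And>s'. s' \<in> S K \<Longrightarrow> s' \<otimes>\<^bsub>tT F K\<^esub> x \<in> Z K"
  shows "tres F M K s \<otimes>\<^bsub>tT F K\<^esub> x \<in> Z K"
proof -
  obtain r s' where rs: "r \<in> carrier (tT F K)" "s' \<in> S K" "tres F M K s = r \<otimes>\<^bsub>tT F K\<^esub> s'"
    using assms(1,3,4) unfolding Sdiv_def by blast
  have K: "subgroup K G" using assms(3) sub2_sg by blast
  interpret K: cring "tT F K" using cr[OF K] .
  have s'c: "s' \<in> carrier (tT F K)" using Sdiv_car[OF assms(1) K rs(2)] .
  have "tres F M K s \<otimes>\<^bsub>tT F K\<^esub> x = r \<otimes>\<^bsub>tT F K\<^esub> (s' \<otimes>\<^bsub>tT F K\<^esub> x)"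
    using rs s'c assms(5) by (simp add: K.m_assoc)
  then show ?thesis using id_lm[OF tideal_id[OF assms(2) K] assms(6)[OF rs(2)] rs(1)] by simp
qed

lemma tideal_Sdiv: "tideal G F P \<Longrightarrow> Sdiv P"
  unfolding Sdiv_def
proof (intro conjI allI impI)
  fix M assume "tideal G F P" "subgroup M G"
  then show "P M \<subseteq> carrier (tT F M)" using tideal_car by blast
next
  fix M K s assume a: "tideal G F P" "sub2 G K M" "s \<in> P M"
  have K: "subgroup K G" using a(2) sub2_sg by blast
  interpret K: cring "tT F K" using cr[OF K] .
  have "tres F M K s \<in> P K" using tideal_res a by blast
  moreover then have "tres F M K s \<in> carrier (tT F K)" using tideal_car a(1) K by blast
  ultimately show "\<exists>r\<in>carrier (tT F K). \<exists>s'\<in>P K. tres F M K s = r \<otimes>\<^bsub>tT F K\<^esub> s'"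
    by (intro bexI[of _ "\<one>\<^bsub>tT F K\<^esub>"] bexI[of _ "tres F M K s"]) auto
qed

lemma Col_car: "u \<in> Col S Z L \<Longrightarrow> u \<in> carrier (tT F L)"
  unfolding Col_def by blast

lemma ColD: "u \<in> Col S Z L \<Longrightarrow> g \<in> carrier G \<Longrightarrow> subgroup M G \<Longrightarrow> subgroup B G \<Longrightarrow>
      B \<subseteq> M \<Longrightarrow> B \<subseteq> conjset G g L \<Longrightarrow> s \<in> S M \<Longrightarrow>
      s \<otimes>\<^bsub>tT F M\<^esub> tnm F B M (tres F (conjset G g L) B (tcj F g L u)) \<in> Z M"
  unfolding Col_def goodN_def by blast

lemma ColI: "u \<in> carrier (tT F L) \<Longrightarrow> (\<And>g M B s. g \<in> carrier G \<Longrightarrow> subgroup M G \<Longrightarrow> subgroup B G \<Longrightarrow>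
      B \<subseteq> M \<Longrightarrow> B \<subseteq> conjset G g L \<Longrightarrow> s \<in> S M \<Longrightarrow>
      s \<otimes>\<^bsub>tT F M\<^esub> tnm F B M (tres F (conjset G g L) B (tcj F g L u)) \<in> Z M) \<Longrightarrow> u \<in> Col S Z L"
  unfolding Col_def goodN_def by blast

lemma Col_unit:
  assumes "u \<in> Col S Z L" "subgroup L G" "s \<in> S L"
  shows "s \<otimes>\<^bsub>tT F L\<^esub> u \<in> Z L"
proof -
  have Lc: "L \<subseteq> carrier G" using sg_sub[OF assms(2)] .
  have 1: "\<one>\<^bsub>G\<^esub> \<in> L" using subgroup.one_closed[OF assms(2)] .
  have cj1: "conjset G \<one>\<^bsub>G\<^esub> L = L" using GG.conjset_one[OF Lc] .
  have uc: "u \<in> carrier (tT F L)" using Col_car[OF assms(1)] .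
  have "s \<otimes>\<^bsub>tT F L\<^esub> tnm F L L (tres F (conjset G \<one>\<^bsub>G\<^esub> L) L (tcj F \<one>\<^bsub>G\<^esub> L u)) \<in> Z L"
    by (rule ColD[OF assms(1) GG.one_closed assms(2) assms(2) order.refl]) (use cj1 assms in auto)
  then show ?thesis using cj1 cj_triv[OF assms(2) 1 uc] res_id[OF assms(2) uc] nm_id[OF assms(2) uc] by simp
qed

lemma Col_res:
  assumes "u \<in> Col S Z L" "sub2 G K L"
  shows "tres F L K u \<in> Col S Z K"
proof (rule ColI)
  have K: "subgroup K G" and L: "subgroup L G" and KL: "K \<subseteq> L" using assms(2) sub2_sg by auto
  have uc: "u \<in> carrier (tT F L)" using Col_car[OF assms(1)] .
  show "tres F L K u \<in> carrier (tT F K)" using res_car[OF assms(2) uc] .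
  fix g M B s assume a: "g \<in> carrier G" "subgroup M G" "subgroup B G" "B \<subseteq> M" "B \<subseteq> conjset G g K" "s \<in> S M"
  have s2: "sub2 G (conjset G g K) (conjset G g L)" using GG.conjset_sub2[OF a(1) assms(2)] .
  have s3: "sub2 G B (conjset G g K)" using a GG.conjset_sub[OF a(1) K] by (simp add: sub2_def)
  have BL: "B \<subseteq> conjset G g L" using a(5) GG.conjset_mono[OF KL] by blast
  have "tres F (conjset G g K) B (tcj F g K (tres F L K u)) = tres F (conjset G g K) B (tres F (conjset G g L) (conjset G g K) (tcj F g L u))"
    using cj_res[OF a(1) assms(2) uc] by simp
  also have "\<dots> = tres F (conjset G g L) B (tcj F g L u)"
    by (rule res_comp[OF s2 s3 cj_car[OF a(1) L uc]])
  finally show "s \<otimes>\<^bsub>tT F M\<^esub> tnm F B M (tres F (conjset G g K) B (tcj F g K (tres F L K u))) \<in> Z M"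
    using ColD[OF assms(1) a(1-4) BL a(6)] by simp
qed

lemma Col_cj:
  assumes "u \<in> Col S Z L" "subgroup L G" "h \<in> carrier G"
  shows "tcj F h L u \<in> Col S Z (conjset G h L)"
proof (rule ColI)
  have uc: "u \<in> carrier (tT F L)" using Col_car[OF assms(1)] .
  show "tcj F h L u \<in> carrier (tT F (conjset G h L))" using cj_car[OF assms(3,2) uc] .
  fix g M B s assume a: "g \<in> carrier G" "subgroup M G" "subgroup B G" "B \<subseteq> M" "B \<subseteq> conjset G g (conjset G h L)" "s \<in> S M"
  have gh: "g \<otimes>\<^bsub>G\<^esub> h \<in> carrier G" using a(1) assms(3) by simp
  have e1: "conjset G g (conjset G h L) = conjset G (g \<otimes>\<^bsub>G\<^esub> h) L"
    using GG.conjset_comp[OF a(1) assms(3) sg_sub[OF assms(2)]] .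
  have e2: "tcj F g (conjset G h L) (tcj F h L u) = tcj F (g \<otimes>\<^bsub>G\<^esub> h) L u"
    using cj_comp[OF a(1) assms(3) assms(2) uc] by simp
  have BL: "B \<subseteq> conjset G (g \<otimes>\<^bsub>G\<^esub> h) L" using a(5) e1 by simp
  show "s \<otimes>\<^bsub>tT F M\<^esub> tnm F B M (tres F (conjset G g (conjset G h L)) B (tcj F g (conjset G h L) (tcj F h L u))) \<in> Z M"
    unfolding e1 e2 by (rule ColD[OF assms(1) gh a(2-4) BL a(6)])
qed

end

context tamb
begin

lemma res_mult: "sub2 G K H \<Longrightarrow> x \<in> carrier (tT F H) \<Longrightarrow> y \<in> carrier (tT F H) \<Longrightarrow>
   tres F H K (x \<otimes>\<^bsub>tT F H\<^esub> y) = tres F H K x \<otimes>\<^bsub>tT F K\<^esub> tres F H K y"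
  by (rule ring_hom_mult[OF res_hom])
lemma res_add: "sub2 G K H \<Longrightarrow> x \<in> carrier (tT F H) \<Longrightarrow> y \<in> carrier (tT F H) \<Longrightarrow>
   tres F H K (x \<oplus>\<^bsub>tT F H\<^esub> y) = tres F H K x \<oplus>\<^bsub>tT F K\<^esub> tres F H K y"
  by (rule ring_hom_add[OF res_hom])
lemma res_zero: "sub2 G K H \<Longrightarrow> tres F H K \<zero>\<^bsub>tT F H\<^esub> = \<zero>\<^bsub>tT F K\<^esub>"
  by (rule ring_hom_zero[OF res_hom]) (auto simp: sub2_def intro: cring.axioms(1) cr)
lemma cj_mult: "g \<in> carrier G \<Longrightarrow> subgroup H G \<Longrightarrow> x \<in> carrier (tT F H) \<Longrightarrow> y \<in> carrier (tT F H) \<Longrightarrow>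
   tcj F g H (x \<otimes>\<^bsub>tT F H\<^esub> y) = tcj F g H x \<otimes>\<^bsub>tT F (conjset G g H)\<^esub> tcj F g H y"
  by (rule ring_hom_mult[OF cj_hom])
lemma cj_add: "g \<in> carrier G \<Longrightarrow> subgroup H G \<Longrightarrow> x \<in> carrier (tT F H) \<Longrightarrow> y \<in> carrier (tT F H) \<Longrightarrow>
   tcj F g H (x \<oplus>\<^bsub>tT F H\<^esub> y) = tcj F g H x \<oplus>\<^bsub>tT F (conjset G g H)\<^esub> tcj F g H y"
  by (rule ring_hom_add[OF cj_hom])
lemma cj_zero: "g \<in> carrier G \<Longrightarrow> subgroup H G \<Longrightarrow> tcj F g H \<zero>\<^bsub>tT F H\<^esub> = \<zero>\<^bsub>tT F (conjset G g H)\<^esub>"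
  by (rule ring_hom_zero[OF cj_hom]) (auto intro: cring.axioms(1) cr GG.conjset_sub)

lemma tr_factor:
  assumes Z: "tideal G F Z" and s2: "sub2 G S M" and s: "s \<in> carrier (tT F M)"
    and A: "finite A" "D0 \<in> A" and Fn: "\<And>D. D \<in> A \<Longrightarrow> Fn D \<in> carrier (tT F S)"
    and key: "tres F M S s \<otimes>\<^bsub>tT F S\<^esub> Fn D0 \<in> Z S"
  shows "s \<otimes>\<^bsub>tT F M\<^esub> ttr F S M (finprod (tT F S) Fn A) \<in> Z M"
proof -
  have S: "subgroup S G" and M: "subgroup M G" using s2 sub2_sg by auto
  interpret S: cring "tT F S" using cr[OF S] .
  interpret M: cring "tT F M" using cr[OF M] .
  have Fc: "Fn \<in> A \<rightarrow> carrier (tT F S)" using Fn by auto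
  note sp = finprod_split[OF cr[OF S] A Fc]
  have rs: "tres F M S s \<in> carrier (tT F S)" using res_car[OF s2 s] .
  have F0: "Fn D0 \<in> carrier (tT F S)" using Fn A by auto
  have Pc: "finprod (tT F S) Fn A \<in> carrier (tT F S)" using Fc by (intro S.finprod_closed) 
  have "finprod (tT F S) Fn A \<otimes>\<^bsub>tT F S\<^esub> tres F M S s =
      (tres F M S s \<otimes>\<^bsub>tT F S\<^esub> Fn D0) \<otimes>\<^bsub>tT F S\<^esub> finprod (tT F S) Fn (A - {D0})"
    using sp rs F0 by (simp add: S.m_ac)
  also have "\<dots> \<in> Z S" using id_rm[OF tideal_id[OF Z S] key sp(2)] .
  finally have inZ: "finprod (tT F S) Fn A \<otimes>\<^bsub>tT F S\<^esub> tres F M S s \<in> Z S" .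
  have "ttr F S M (finprod (tT F S) Fn A \<otimes>\<^bsub>tT F S\<^esub> tres F M S s) = ttr F S M (finprod (tT F S) Fn A) \<otimes>\<^bsub>tT F M\<^esub> s"
    by (rule frob[OF s2 Pc s])
  also have "\<dots> = s \<otimes>\<^bsub>tT F M\<^esub> ttr F S M (finprod (tT F S) Fn A)"
    using tr_car[OF s2 Pc] s by (simp add: M.m_comm)
  finally show ?thesis using tideal_tr[OF Z s2 inZ] by simp
qed

lemma Col_zero:
  assumes Z: "tideal G F Z" and Sd: "Sdiv S" and L: "subgroup L G"
  shows "\<zero>\<^bsub>tT F L\<^esub> \<in> Col S Z L"
proof (rule ColI)
  show "\<zero>\<^bsub>tT F L\<^esub> \<in> carrier (tT F L)" using cr[OF L] by (simp add: cring.axioms(1) ring.ring_simprules(2))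
  fix g M B s assume a: "g \<in> carrier G" "subgroup M G" "subgroup B G" "B \<subseteq> M" "B \<subseteq> conjset G g L" "s \<in> S M"
  have gL: "subgroup (conjset G g L) G" using GG.conjset_sub[OF a(1) L] .
  have s2: "sub2 G B (conjset G g L)" using a gL by (simp add: sub2_def)
  have s3: "sub2 G B M" using a by (simp add: sub2_def)
  have e: "tres F (conjset G g L) B (tcj F g L \<zero>\<^bsub>tT F L\<^esub>) = \<zero>\<^bsub>tT F B\<^esub>"
    using cj_zero[OF a(1) L] res_zero[OF s2] by simp
  have "tnm F B M \<zero>\<^bsub>tT F B\<^esub> \<in> Z M" using tideal_nm[OF Z s3 id_zero[OF tideal_id[OF Z a(3)]]] .
  then show "s \<otimes>\<^bsub>tT F M\<^esub> tnm F B M (tres F (conjset G g L) B (tcj F g L \<zero>\<^bsub>tT F L\<^esub>)) \<in> Z M"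
    unfolding e using id_lm[OF tideal_id[OF Z a(2)]] Sdiv_car[OF Sd a(2) a(6)] by blast
qed

lemma Col_mult:
  assumes Z: "tideal G F Z" and Sd: "Sdiv S" and L: "subgroup L G"
    and u: "u \<in> Col S Z L" and r: "r \<in> carrier (tT F L)"
  shows "r \<otimes>\<^bsub>tT F L\<^esub> u \<in> Col S Z L"
proof (rule ColI)
  have uc: "u \<in> carrier (tT F L)" using Col_car[OF u] .
  show "r \<otimes>\<^bsub>tT F L\<^esub> u \<in> carrier (tT F L)" using cr[OF L] uc r by (simp add: cring.axioms(1) ring.ring_simprules(5))
  fix g M B s assume a: "g \<in> carrier G" "subgroup M G" "subgroup B G" "B \<subseteq> M" "B \<subseteq> conjset G g L" "s \<in> S M"
  have gL: "subgroup (conjset G g L) G" using GG.conjset_sub[OF a(1) L] .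
  have s2: "sub2 G B (conjset G g L)" using a gL by (simp add: sub2_def)
  have s3: "sub2 G B M" using a by (simp add: sub2_def)
  interpret M: cring "tT F M" using cr[OF a(2)] .
  define x where "x = tres F (conjset G g L) B (tcj F g L r)"
  define y where "y = tres F (conjset G g L) B (tcj F g L u)"
  have xc: "x \<in> carrier (tT F B)" unfolding x_def using res_car[OF s2 cj_car[OF a(1) L r]] .
  have yc: "y \<in> carrier (tT F B)" unfolding y_def using res_car[OF s2 cj_car[OF a(1) L uc]] .
  have e: "tres F (conjset G g L) B (tcj F g L (r \<otimes>\<^bsub>tT F L\<^esub> u)) = x \<otimes>\<^bsub>tT F B\<^esub> y"
    unfolding x_def y_def using cj_mult[OF a(1) L r uc] res_mult[OF s2 cj_car[OF a(1) L r] cj_car[OF a(1) L uc]] by simp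
  have Nx: "tnm F B M x \<in> carrier (tT F M)" using nm_car[OF s3 xc] .
  have Ny: "tnm F B M y \<in> carrier (tT F M)" using nm_car[OF s3 yc] .
  have sc: "s \<in> carrier (tT F M)" using Sdiv_car[OF Sd a(2) a(6)] .
  have in1: "s \<otimes>\<^bsub>tT F M\<^esub> tnm F B M y \<in> Z M" using ColD[OF u a] unfolding y_def .
  have "s \<otimes>\<^bsub>tT F M\<^esub> tnm F B M (x \<otimes>\<^bsub>tT F B\<^esub> y) = tnm F B M x \<otimes>\<^bsub>tT F M\<^esub> (s \<otimes>\<^bsub>tT F M\<^esub> tnm F B M y)"
    using nm_mult[OF s3 xc yc] Nx Ny sc by (simp add: M.m_lcomm)
  then show "s \<otimes>\<^bsub>tT F M\<^esub> tnm F B M (tres F (conjset G g L) B (tcj F g L (r \<otimes>\<^bsub>tT F L\<^esub> u))) \<in> Z M"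
    unfolding e using id_lm[OF tideal_id[OF Z a(2)] in1 Nx] by simp
qed

end

context tamb
begin

lemma RS:
  assumes Z: "tideal G F Z" and s2: "sub2 G B M" and a: "a \<in> carrier (tT F B)" and b: "b \<in> carrier (tT F B)"
    and s: "s \<in> carrier (tT F M)"
    and H: "\<And>S g t. subgroup S G \<Longrightarrow> S \<subseteq> M \<Longrightarrow> g \<in> M \<Longrightarrow> t = a \<or> t = b \<Longrightarrow>
      tres F M S s \<otimes>\<^bsub>tT F S\<^esub> tnm F (S \<inter> conjset G g B) S (tres F (conjset G g B) (S \<inter> conjset G g B) (tcj F g B t)) \<in> Z S"
  shows "s \<otimes>\<^bsub>tT F M\<^esub> tnm F B M (a \<oplus>\<^bsub>tT F B\<^esub> b) \<in> Z M"
proof -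
  have B: "subgroup B G" and M: "subgroup M G" and BM: "B \<subseteq> M" using s2 sub2_sg by auto
  define J where "J = {t \<in> carrier (tT F M). s \<otimes>\<^bsub>tT F M\<^esub> t \<in> Z M}"
  have Jid: "ideal J (tT F M)" unfolding J_def by (rule colon_ideal[OF cr[OF M] tideal_id[OF Z M] s])
  have "tnm F B M (a \<oplus>\<^bsub>tT F B\<^esub> b) \<in> J"
    unfolding recip_sum[OF s2 a b] Let_def
    apply (rule finsum_ideal[OF cr[OF M] Jid])
    subgoal premises p for Ob
    proof -
      define f where "f = crep Ob"
      define S where "S = bstab G M B f"
      have S: "subgroup S G" "S \<subseteq> M" unfolding S_def f_def using GG.bstab_crep[OF B M p] by auto
      have s2': "sub2 G S M" using S M by (simp add: sub2_def)
      define Fn where "Fn = (\<lambda>D. tnm F (S \<inter> conjset G (crep D) B) S (tres F (conjset G (crep D) B) (S \<inter> conjset G (crep D) B)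
                 (tcj F (crep D) B (if f (crep D <#\<^bsub>G\<^esub> B) then a else b))))"
      define A where "A = dcosets G M S B"
      have Afin: "finite A" unfolding A_def using GG.dcosets_fin[OF finG sg_sub[OF M]] .
      obtain D0 where D0: "D0 \<in> A" unfolding A_def using GG.dcosets_ne[OF M] by blast
      have gM: "crep D \<in> M" if "D \<in> A" for D using GG.crep_dc[OF M S(1) B S(2) BM] that unfolding A_def .
      have Fc: "Fn D \<in> carrier (tT F S)" if D: "D \<in> A" for D
      proof -
        have gc: "crep D \<in> carrier G" using gM[OF D] sg_sub[OF M] by blast
        have gB: "subgroup (conjset G (crep D) B) G" using GG.conjset_sub[OF gc B] .
        have M': "subgroup (S \<inter> conjset G (crep D) B) G" using GG.subgroups_Inter_pair[OF S(1) gB] .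
        have q1: "sub2 G (S \<inter> conjset G (crep D) B) (conjset G (crep D) B)" using M' gB by (auto simp: sub2_def)
        have q2: "sub2 G (S \<inter> conjset G (crep D) B) S" using M' S by (auto simp: sub2_def)
        have tc: "(if f (crep D <#\<^bsub>G\<^esub> B) then a else b) \<in> carrier (tT F B)" using a b by simp
        show ?thesis unfolding Fn_def using nm_car[OF q2 res_car[OF q1 cj_car[OF gc B tc]]] .
      qed
      have key: "tres F M S s \<otimes>\<^bsub>tT F S\<^esub> Fn D0 \<in> Z S"
        unfolding Fn_def by (rule H[OF S gM[OF D0]]) simp
      have X: "s \<otimes>\<^bsub>tT F M\<^esub> ttr F S M (finprod (tT F S) Fn A) \<in> Z M"
        by (rule tr_factor[where Fn=Fn, OF Z s2' s Afin D0 Fc key])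
      have Xc: "ttr F S M (finprod (tT F S) Fn A) \<in> carrier (tT F M)"
      proof -
        interpret S: cring "tT F S" using cr[OF S(1)] .
        show ?thesis using tr_car[OF s2'] Fc by (simp add: Pi_iff S.finprod_closed)
      qed
      show ?thesis using X Xc unfolding J_def Fn_def A_def S_def f_def by simp
    qed
    done
  then show ?thesis unfolding J_def by simp
qed

end

context tamb
begin

lemma RT:
  assumes Z: "tideal G F Z" and s2: "sub2 G B M" and s1: "sub2 G B1 B" and w: "w \<in> carrier (tT F B1)"
    and s: "s \<in> carrier (tT F M)"
    and H: "\<And>S g. subgroup S G \<Longrightarrow> S \<subseteq> M \<Longrightarrow> g \<in> M \<Longrightarrow>
      tres F M S s \<otimes>\<^bsub>tT F S\<^esub> tnm F (S \<inter> conjset G g B1) S (tres F (conjset G g B1) (S \<inter> conjset G g B1) (tcj F g B1 w)) \<in> Z S"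
  shows "s \<otimes>\<^bsub>tT F M\<^esub> tnm F B M (ttr F B1 B w) \<in> Z M"
proof -
  have B: "subgroup B G" and M: "subgroup M G" and BM: "B \<subseteq> M" using s2 sub2_sg by auto
  have B1: "subgroup B1 G" and B1B: "B1 \<subseteq> B" using s1 sub2_sg by auto
  have B1M: "B1 \<subseteq> M" using B1B BM by blast
  define J where "J = {t \<in> carrier (tT F M). s \<otimes>\<^bsub>tT F M\<^esub> t \<in> Z M}"
  have Jid: "ideal J (tT F M)" unfolding J_def by (rule colon_ideal[OF cr[OF M] tideal_id[OF Z M] s])
  have "tnm F B M (ttr F B1 B w) \<in> J"
    unfolding recip_tr[OF s2 s1 w] Let_def
    apply (rule finsum_ideal[OF cr[OF M] Jid])
    subgoal premises p for Ob
    proof -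
      define f where "f = crep Ob"
      define S where "S = sstab G M B f"
      note sf = GG.sorbit_facts[OF B M B1 B1M p]
      have S: "subgroup S G" "S \<subseteq> M" unfolding S_def f_def using sf by auto
      have s2': "sub2 G S M" using S M by (simp add: sub2_def)
      define Fn where "Fn = (\<lambda>D. tnm F (S \<inter> conjset G (crep (f (crep D <#\<^bsub>G\<^esub> B))) B1) S
          (tres F (conjset G (crep (f (crep D <#\<^bsub>G\<^esub> B))) B1) (S \<inter> conjset G (crep (f (crep D <#\<^bsub>G\<^esub> B))) B1)
                 (tcj F (crep (f (crep D <#\<^bsub>G\<^esub> B))) B1 w)))"
      define A where "A = dcosets G M S B"
      have Afin: "finite A" unfolding A_def using GG.dcosets_fin[OF finG sg_sub[OF M]] .
      obtain D0 where D0: "D0 \<in> A" unfolding A_def using GG.dcosets_ne[OF M] by blast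
      have gM: "crep D \<in> M" if "D \<in> A" for D using GG.crep_dc[OF M S(1) B S(2) BM] that unfolding A_def .
      have g'M: "crep (f (crep D <#\<^bsub>G\<^esub> B)) \<in> M" if "D \<in> A" for D
        unfolding f_def using sf(3)[OF gM[OF that]] .
      have Fc: "Fn D \<in> carrier (tT F S)" if D: "D \<in> A" for D
      proof -
        define g where "g = crep (f (crep D <#\<^bsub>G\<^esub> B))"
        have gc: "g \<in> carrier G" using g'M[OF D] sg_sub[OF M] unfolding g_def by blast
        have gB: "subgroup (conjset G g B1) G" using GG.conjset_sub[OF gc B1] .
        have M': "subgroup (S \<inter> conjset G g B1) G" using GG.subgroups_Inter_pair[OF S(1) gB] .
        have q1: "sub2 G (S \<inter> conjset G g B1) (conjset G g B1)" using M' gB by (auto simp: sub2_def)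
        have q2: "sub2 G (S \<inter> conjset G g B1) S" using M' S by (auto simp: sub2_def)
        show ?thesis unfolding Fn_def g_def[symmetric] using nm_car[OF q2 res_car[OF q1 cj_car[OF gc B1 w]]] .
      qed
      have key: "tres F M S s \<otimes>\<^bsub>tT F S\<^esub> Fn D0 \<in> Z S"
        unfolding Fn_def by (rule H[OF S g'M[OF D0]])
      have X: "s \<otimes>\<^bsub>tT F M\<^esub> ttr F S M (finprod (tT F S) Fn A) \<in> Z M"
        by (rule tr_factor[where Fn=Fn, OF Z s2' s Afin D0 Fc key])
      have Xc: "ttr F S M (finprod (tT F S) Fn A) \<in> carrier (tT F M)"
      proof -
        interpret S: cring "tT F S" using cr[OF S(1)] .
        show ?thesis using tr_car[OF s2'] Fc by (simp add: Pi_iff S.finprod_closed)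
      qed
      show ?thesis using X Xc unfolding J_def Fn_def A_def S_def f_def by simp
    qed
    done
  then show ?thesis unfolding J_def by simp
qed

lemma Col_add:
  assumes Z: "tideal G F Z" and Sd: "Sdiv S" and L: "subgroup L G"
    and u1: "u1 \<in> Col S Z L" and u2: "u2 \<in> Col S Z L"
  shows "u1 \<oplus>\<^bsub>tT F L\<^esub> u2 \<in> Col S Z L"
proof (rule ColI)
  have u1c: "u1 \<in> carrier (tT F L)" using Col_car[OF u1] .
  have u2c: "u2 \<in> carrier (tT F L)" using Col_car[OF u2] .
  show "u1 \<oplus>\<^bsub>tT F L\<^esub> u2 \<in> carrier (tT F L)" using cr[OF L] u1c u2c by (simp add: cring.axioms(1) ring.ring_simprules(1))
  fix g M B s assume a: "g \<in> carrier G" "subgroup M G" "subgroup B G" "B \<subseteq> M" "B \<subseteq> conjset G g L" "s \<in> S M"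
  have gL: "subgroup (conjset G g L) G" using GG.conjset_sub[OF a(1) L] .
  have s2: "sub2 G B (conjset G g L)" using a gL by (simp add: sub2_def)
  have s3: "sub2 G B M" using a by (simp add: sub2_def)
  define x where "x = tres F (conjset G g L) B (tcj F g L u1)"
  define y where "y = tres F (conjset G g L) B (tcj F g L u2)"
  have xC: "x \<in> Col S Z B" unfolding x_def using Col_res[OF Col_cj[OF u1 L a(1)] s2] .
  have yC: "y \<in> Col S Z B" unfolding y_def using Col_res[OF Col_cj[OF u2 L a(1)] s2] .
  have e: "tres F (conjset G g L) B (tcj F g L (u1 \<oplus>\<^bsub>tT F L\<^esub> u2)) = x \<oplus>\<^bsub>tT F B\<^esub> y"
    unfolding x_def y_def using cj_add[OF a(1) L u1c u2c] res_add[OF s2 cj_car[OF a(1) L u1c] cj_car[OF a(1) L u2c]] by simp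
  have sc: "s \<in> carrier (tT F M)" using Sdiv_car[OF Sd a(2) a(6)] .
  have "s \<otimes>\<^bsub>tT F M\<^esub> tnm F B M (x \<oplus>\<^bsub>tT F B\<^esub> y) \<in> Z M"
  proof (rule RS[OF Z s3 Col_car[OF xC] Col_car[OF yC] sc])
    fix S' g' t assume b: "subgroup S' G" "S' \<subseteq> M" "g' \<in> M" "t = x \<or> t = y"
    have tC: "t \<in> Col S Z B" using b(4) xC yC by blast
    have g'c: "g' \<in> carrier G" using b(3) sg_sub[OF a(2)] by blast
    have gB: "subgroup (conjset G g' B) G" using GG.conjset_sub[OF g'c a(3)] .
    have M': "subgroup (S' \<inter> conjset G g' B) G" using GG.subgroups_Inter_pair[OF b(1) gB] .
    have q1: "sub2 G (S' \<inter> conjset G g' B) (conjset G g' B)" using M' gB by (auto simp: sub2_def)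
    have q2: "sub2 G (S' \<inter> conjset G g' B) S'" using M' b by (auto simp: sub2_def)
    have q3: "sub2 G S' M" using b a by (auto simp: sub2_def)
    show "tres F M S' s \<otimes>\<^bsub>tT F S'\<^esub> tnm F (S' \<inter> conjset G g' B) S' (tres F (conjset G g' B) (S' \<inter> conjset G g' B) (tcj F g' B t)) \<in> Z S'"
    proof (rule Sdiv_use[OF Sd Z q3 a(6)])
      show "tnm F (S' \<inter> conjset G g' B) S' (tres F (conjset G g' B) (S' \<inter> conjset G g' B) (tcj F g' B t)) \<in> carrier (tT F S')"
        using nm_car[OF q2 res_car[OF q1 cj_car[OF g'c a(3) Col_car[OF tC]]]] .
      fix s' assume "s' \<in> S S'"
      then show "s' \<otimes>\<^bsub>tT F S'\<^esub> tnm F (S' \<inter> conjset G g' B) S' (tres F (conjset G g' B) (S' \<inter> conjset G g' B) (tcj F g' B t)) \<in> Z S'"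
        using ColD[OF tC g'c b(1) M'] by blast
    qed
  qed
  then show "s \<otimes>\<^bsub>tT F M\<^esub> tnm F B M (tres F (conjset G g L) B (tcj F g L (u1 \<oplus>\<^bsub>tT F L\<^esub> u2))) \<in> Z M"
    unfolding e .
qed

lemma Col_nm:
  assumes Z: "tideal G F Z" and Sd: "Sdiv S" and KL: "sub2 G K L" and u: "u \<in> Col S Z K"
  shows "tnm F K L u \<in> Col S Z L"
proof (rule ColI)
  have K: "subgroup K G" and L: "subgroup L G" using KL sub2_sg by auto
  have uc: "u \<in> carrier (tT F K)" using Col_car[OF u] .
  show "tnm F K L u \<in> carrier (tT F L)" using nm_car[OF KL uc] .
  fix g M B s assume a: "g \<in> carrier G" "subgroup M G" "subgroup B G" "B \<subseteq> M" "B \<subseteq> conjset G g L" "s \<in> S M"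
  define K' where "K' = conjset G g K"
  define L' where "L' = conjset G g L"
  have L': "subgroup L' G" unfolding L'_def using GG.conjset_sub[OF a(1) L] .
  have K': "subgroup K' G" unfolding K'_def using GG.conjset_sub[OF a(1) K] .
  have KL': "sub2 G K' L'" unfolding K'_def L'_def using GG.conjset_sub2[OF a(1) KL] .
  have s2: "sub2 G B L'" using a L' unfolding L'_def by (simp add: sub2_def)
  have s3: "sub2 G B M" using a by (simp add: sub2_def)
  define w where "w = tcj F g K u"
  have wC: "w \<in> Col S Z K'" unfolding w_def K'_def using Col_cj[OF u K a(1)] .
  have wc: "w \<in> carrier (tT F K')" using Col_car[OF wC] .
  have e1: "tcj F g L (tnm F K L u) = tnm F K' L' w" unfolding w_def K'_def L'_def using cj_nm[OF a(1) KL uc] .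
  define Fn where "Fn = (\<lambda>D. tnm F (B \<inter> conjset G (crep D) K') B (tres F (conjset G (crep D) K') (B \<inter> conjset G (crep D) K') (tcj F (crep D) K' w)))"
  define A where "A = dcosets G L' B K'"
  have e2: "tres F L' B (tnm F K' L' w) = finprod (tT F B) Fn A"
    unfolding mackey_nm[OF s2 KL' wc] Fn_def A_def Let_def ..
  have Afin: "finite A" unfolding A_def using GG.dcosets_fin[OF finG sg_sub[OF L']] .
  obtain D0 where D0: "D0 \<in> A" unfolding A_def using GG.dcosets_ne[OF L'] by blast
  have hL: "crep D \<in> L'" if "D \<in> A" for D
    using GG.crep_dc[OF L' a(3) K' _ _ ] that s2 KL' unfolding A_def by (auto simp: sub2_def)
  have hc: "crep D \<in> carrier G" if "D \<in> A" for D using hL[OF that] sg_sub[OF L'] by blast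
  define M0 where "M0 = (\<lambda>D. B \<inter> conjset G (crep D) K')"
  have M0: "subgroup (M0 D) G" "sub2 G (M0 D) (conjset G (crep D) K')" "sub2 G (M0 D) B" if "D \<in> A" for D
  proof -
    have gB: "subgroup (conjset G (crep D) K') G" using GG.conjset_sub[OF hc[OF that] K'] .
    show "subgroup (M0 D) G" unfolding M0_def using GG.subgroups_Inter_pair[OF a(3) gB] .
    then show "sub2 G (M0 D) (conjset G (crep D) K')" "sub2 G (M0 D) B" using gB a(3) unfolding M0_def by (auto simp: sub2_def)
  qed
  define y where "y = (\<lambda>D. tres F (conjset G (crep D) K') (M0 D) (tcj F (crep D) K' w))"
  have yc: "y D \<in> carrier (tT F (M0 D))" if "D \<in> A" for D
    unfolding y_def using res_car[OF M0(2)[OF that] cj_car[OF hc[OF that] K' wc]] .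
  have FnE: "Fn D = tnm F (M0 D) B (y D)" for D unfolding Fn_def M0_def y_def ..
  have Fc: "Fn D \<in> carrier (tT F B)" if "D \<in> A" for D unfolding FnE using nm_car[OF M0(3)[OF that] yc[OF that]] .
  have Fcp: "Fn \<in> A \<rightarrow> carrier (tT F B)" using Fc by auto
  note sp = finprod_split[OF cr[OF a(3)] Afin D0 Fcp]
  interpret M: cring "tT F M" using cr[OF a(2)] .
  have sc: "s \<in> carrier (tT F M)" using Sdiv_car[OF Sd a(2) a(6)] .
  have N0: "tnm F B M (Fn D0) = tnm F (M0 D0) M (y D0)" unfolding FnE using nm_comp[OF s3 M0(3)[OF D0] yc[OF D0]] .
  have N0c: "tnm F B M (Fn D0) \<in> carrier (tT F M)" using nm_car[OF s3 Fc[OF D0]] .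
  have Nr: "tnm F B M (finprod (tT F B) Fn (A - {D0})) \<in> carrier (tT F M)" using nm_car[OF s3 sp(2)] .
  have M0M: "M0 D0 \<subseteq> M" unfolding M0_def using a(4) by blast
  have M0K: "M0 D0 \<subseteq> conjset G (crep D0) K'" unfolding M0_def by blast
  have key: "s \<otimes>\<^bsub>tT F M\<^esub> tnm F (M0 D0) M (y D0) \<in> Z M"
    unfolding y_def by (rule ColD[OF wC hc[OF D0] a(2) M0(1)[OF D0] M0M M0K a(6)])
  have "s \<otimes>\<^bsub>tT F M\<^esub> tnm F B M (finprod (tT F B) Fn A) =
        (s \<otimes>\<^bsub>tT F M\<^esub> tnm F B M (Fn D0)) \<otimes>\<^bsub>tT F M\<^esub> tnm F B M (finprod (tT F B) Fn (A - {D0}))"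
    unfolding sp(1) using nm_mult[OF s3 Fc[OF D0] sp(2)] sc N0c Nr by (simp add: M.m_assoc)
  also have "\<dots> \<in> Z M" using id_rm[OF tideal_id[OF Z a(2)] key[folded N0] Nr] .
  finally show "s \<otimes>\<^bsub>tT F M\<^esub> tnm F B M (tres F (conjset G g L) B (tcj F g L (tnm F K L u))) \<in> Z M"
    unfolding e1 L'_def[symmetric] e2 .
qed

end

context tamb
begin

inductive_set Eset :: "('g set \<Rightarrow> 'a set) \<Rightarrow> ('g set \<Rightarrow> 'a set) \<Rightarrow> 'g set \<Rightarrow> 'a set"
  for S Z B where
  E0: "\<zero>\<^bsub>tT F B\<^esub> \<in> Eset S Z B"
| E1: "sub2 G B1 B \<Longrightarrow> w \<in> Col S Z B1 \<Longrightarrow> e \<in> Eset S Z B \<Longrightarrow> ttr F B1 B w \<oplus>\<^bsub>tT F B\<^esub> e \<in> Eset S Z B"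

lemma E_car: "subgroup B G \<Longrightarrow> e \<in> Eset S Z B \<Longrightarrow> e \<in> carrier (tT F B)"
proof -
  assume B: "subgroup B G"
  interpret B: cring "tT F B" using cr[OF B] .
  show "e \<in> Eset S Z B \<Longrightarrow> e \<in> carrier (tT F B)"
    by (induction e rule: Eset.induct) (auto intro!: tr_car dest: Col_car)
qed

lemma E_add:
  assumes B: "subgroup B G" and e1: "e1 \<in> Eset S Z B" and e2: "e2 \<in> Eset S Z B"
  shows "e1 \<oplus>\<^bsub>tT F B\<^esub> e2 \<in> Eset S Z B"
  using e1
proof (induction e1 rule: Eset.induct)
  interpret B: cring "tT F B" using cr[OF B] .
  case E0
  then show ?case using E_car[OF B e2] e2 by simp
next
  interpret B: cring "tT F B" using cr[OF B] .
  case (E1 B1 w e)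
  have wc: "ttr F B1 B w \<in> carrier (tT F B)" using tr_car[OF E1(1) Col_car[OF E1(2)]] .
  have "ttr F B1 B w \<oplus>\<^bsub>tT F B\<^esub> e \<oplus>\<^bsub>tT F B\<^esub> e2 = ttr F B1 B w \<oplus>\<^bsub>tT F B\<^esub> (e \<oplus>\<^bsub>tT F B\<^esub> e2)"
    using wc E_car[OF B E1(3)] E_car[OF B e2] by (simp add: B.a_assoc)
  then show ?case using Eset.E1[OF E1(1) E1(2) E1(4)] by simp
qed

lemma E_tr:
  assumes s1: "sub2 G B1 B" and w: "w \<in> Col S Z B1"
  shows "ttr F B1 B w \<in> Eset S Z B"
proof -
  have B: "subgroup B G" using s1 sub2_sg by auto
  interpret B: cring "tT F B" using cr[OF B] .
  have "ttr F B1 B w \<oplus>\<^bsub>tT F B\<^esub> \<zero>\<^bsub>tT F B\<^esub> \<in> Eset S Z B" by (rule Eset.E1[OF s1 w Eset.E0])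
  then show ?thesis using tr_car[OF s1 Col_car[OF w]] by simp
qed

lemma E_finsum:
  assumes B: "subgroup B G" and f: "\<And>x. x \<in> A \<Longrightarrow> f x \<in> Eset S Z B"
  shows "finsum (tT F B) f A \<in> Eset S Z B"
proof (cases "finite A")
  case False
  interpret B: cring "tT F B" using cr[OF B] .
  show ?thesis using False Eset.E0 by (simp add: B.finsum_infinite)
next
  case True
  interpret B: cring "tT F B" using cr[OF B] .
  from True f show ?thesis
  proof (induction A rule: finite_induct)
    case empty
    then show ?case using Eset.E0 by simp
  next
    case (insert a A)
    have fc: "f \<in> A \<rightarrow> carrier (tT F B)" using insert(4) E_car[OF B] by auto
    have "finsum (tT F B) f (insert a A) = f a \<oplus>\<^bsub>tT F B\<^esub> finsum (tT F B) f A"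
      using insert(1,2) fc E_car[OF B insert(4)] by (intro B.finsum_insert) auto
    then show ?case using E_add[OF B insert(4)[of a] insert(3)] insert(4) by simp
  qed
qed

lemma E_res:
  assumes Z: "tideal G F Z" and s2: "sub2 G B' B" and e: "e \<in> Eset S Z B"
  shows "tres F B B' e \<in> Eset S Z B'"
  using e
proof (induction e rule: Eset.induct)
  case E0
  then show ?case using res_zero[OF s2] Eset.E0 by simp
next
  case (E1 B1 w e)
  have B: "subgroup B G" and B': "subgroup B' G" and B'B: "B' \<subseteq> B" using s2 sub2_sg by auto
  have B1: "subgroup B1 G" and B1B: "B1 \<subseteq> B" using E1(1) sub2_sg by auto
  have wc: "w \<in> carrier (tT F B1)" using Col_car[OF E1(2)] .
  have trc: "ttr F B1 B w \<in> carrier (tT F B)" using tr_car[OF E1(1) wc] .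
  have ec: "e \<in> carrier (tT F B)" using E_car[OF B E1(3)] .
  have "tres F B B' (ttr F B1 B w) \<in> Eset S Z B'"
    unfolding mackey_tr[OF s2 E1(1) wc] Let_def
  proof (rule E_finsum[OF B'])
    fix D assume D: "D \<in> dcosets G B B' B1"
    have hB: "crep D \<in> B" using GG.crep_dc[OF B B' B1 B'B B1B D] .
    have hc: "crep D \<in> carrier G" using hB sg_sub[OF B] by blast
    have gB: "subgroup (conjset G (crep D) B1) G" using GG.conjset_sub[OF hc B1] .
    have M': "subgroup (B' \<inter> conjset G (crep D) B1) G" using GG.subgroups_Inter_pair[OF B' gB] .
    have q1: "sub2 G (B' \<inter> conjset G (crep D) B1) (conjset G (crep D) B1)" using M' gB by (auto simp: sub2_def)
    have q2: "sub2 G (B' \<inter> conjset G (crep D) B1) B'" using M' B' by (auto simp: sub2_def)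
    show "ttr F (B' \<inter> conjset G (crep D) B1) B' (tres F (conjset G (crep D) B1) (B' \<inter> conjset G (crep D) B1) (tcj F (crep D) B1 w)) \<in> Eset S Z B'"
      by (rule E_tr[OF q2 Col_res[OF Col_cj[OF E1(2) B1 hc] q1]])
  qed
  then show ?case using res_add[OF s2 trc ec] E_add[OF B' _ E1(4)] by simp
qed

lemma E_cj:
  assumes g: "g \<in> carrier G" and B: "subgroup B G" and e: "e \<in> Eset S Z B"
  shows "tcj F g B e \<in> Eset S Z (conjset G g B)"
  using e
proof (induction e rule: Eset.induct)
  case E0
  then show ?case using cj_zero[OF g B] Eset.E0 by simp
next
  case (E1 B1 w e)
  have B1: "subgroup B1 G" using E1(1) sub2_sg by auto
  have wc: "w \<in> carrier (tT F B1)" using Col_car[OF E1(2)] .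
  have trc: "ttr F B1 B w \<in> carrier (tT F B)" using tr_car[OF E1(1) wc] .
  have ec: "e \<in> carrier (tT F B)" using E_car[OF B E1(3)] .
  have gB: "subgroup (conjset G g B) G" using GG.conjset_sub[OF g B] .
  have "tcj F g B (ttr F B1 B w) \<in> Eset S Z (conjset G g B)"
    unfolding cj_tr[OF g E1(1) wc] by (rule E_tr[OF GG.conjset_sub2[OF g E1(1)] Col_cj[OF E1(2) B1 g]])
  then show ?case using cj_add[OF g B trc ec] E_add[OF gB _ E1(4)] by simp
qed

end

context tamb
begin

lemma Claim:
  assumes Z: "tideal G F Z" and Sd: "Sdiv S"
  shows "subgroup M G \<Longrightarrow> sub2 G B M \<Longrightarrow> v \<in> Eset S Z B \<Longrightarrow> s \<in> S M \<Longrightarrow>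
     s \<otimes>\<^bsub>tT F M\<^esub> tnm F B M v \<in> Z M"
proof (induction "card M" arbitrary: M B v s rule: less_induct)
  case less
  have M: "subgroup M G" using less.prems(1) .
  have s2: "sub2 G B M" using less.prems(2) .
  have B: "subgroup B G" and BM: "B \<subseteq> M" using s2 sub2_sg by auto
  interpret M: cring "tT F M" using cr[OF M] .
  have "\<forall>s\<in>S M. s \<otimes>\<^bsub>tT F M\<^esub> tnm F B M v \<in> Z M" using less.prems(3)
  proof (induction v rule: Eset.induct)
    case E0
    have "tnm F B M \<zero>\<^bsub>tT F B\<^esub> \<in> Z M" using tideal_nm[OF Z s2 id_zero[OF tideal_id[OF Z B]]] .
    then show ?case using id_lm[OF tideal_id[OF Z M]] Sdiv_car[OF Sd M] by blast
  next
    case (E1 B1 w e)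
    show ?case
    proof
      fix s assume s: "s \<in> S M"
      have sc: "s \<in> carrier (tT F M)" using Sdiv_car[OF Sd M s] .
      have wc: "w \<in> carrier (tT F B1)" using Col_car[OF E1(2)] .
      have ac: "ttr F B1 B w \<in> carrier (tT F B)" using tr_car[OF E1(1) wc] .
      have ec: "e \<in> carrier (tT F B)" using E_car[OF B E1(3)] .
      have aE: "ttr F B1 B w \<in> Eset S Z B" using E_tr[OF E1(1) E1(2)] .
      show "s \<otimes>\<^bsub>tT F M\<^esub> tnm F B M (ttr F B1 B w \<oplus>\<^bsub>tT F B\<^esub> e) \<in> Z M"
      proof (rule RS[OF Z s2 ac ec sc])
        fix S' g' t assume b: "subgroup S' G" "S' \<subseteq> M" "g' \<in> M" "t = ttr F B1 B w \<or> t = e"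
        have tE: "t \<in> Eset S Z B" using b(4) aE E1(3) by blast
        have tc: "t \<in> carrier (tT F B)" using E_car[OF B tE] .
        have g'c: "g' \<in> carrier G" using b(3) sg_sub[OF M] by blast
        have gB: "subgroup (conjset G g' B) G" using GG.conjset_sub[OF g'c B] .
        have M': "subgroup (S' \<inter> conjset G g' B) G" using GG.subgroups_Inter_pair[OF b(1) gB] .
        have q1: "sub2 G (S' \<inter> conjset G g' B) (conjset G g' B)" using M' gB by (auto simp: sub2_def)
        have q2: "sub2 G (S' \<inter> conjset G g' B) S'" using M' b by (auto simp: sub2_def)
        have q3: "sub2 G S' M" using b M by (auto simp: sub2_def)
        show "tres F M S' s \<otimes>\<^bsub>tT F S'\<^esub> tnm F (S' \<inter> conjset G g' B) S' (tres F (conjset G g' B) (S' \<inter> conjset G g' B) (tcj F g' B t)) \<in> Z S'"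
        proof (cases "S' = M")
          case True
          have cM: "conjset G g' M = M" using GG.conjset_self[OF M b(3)] .
          have cBM: "conjset G g' B \<subseteq> M" using GG.conjset_mono[OF BM, of g'] cM by simp
          have i: "S' \<inter> conjset G g' B = conjset G g' B" using True cBM by blast
          have cjt: "tcj F g' B t \<in> carrier (tT F (conjset G g' B))" using cj_car[OF g'c B tc] .
          have r1: "tres F (conjset G g' B) (conjset G g' B) (tcj F g' B t) = tcj F g' B t"
            using res_id[OF gB cjt] .
          have n1: "tnm F (conjset G g' B) M (tcj F g' B t) = tnm F B M t"
          proof -
            have "tcj F g' M (tnm F B M t) = tnm F (conjset G g' B) (conjset G g' M) (tcj F g' B t)"
              using cj_nm[OF g'c s2 tc] .
            moreover have "tcj F g' M (tnm F B M t) = tnm F B M t" using cj_triv[OF M b(3) nm_car[OF s2 tc]] .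
            ultimately show ?thesis using cM by simp
          qed
          have r0: "tres F M M s = s" using res_id[OF M sc] .
          have goal: "s \<otimes>\<^bsub>tT F M\<^esub> tnm F B M t \<in> Z M"
          proof (cases "t = e")
            case True
            then show ?thesis using E1(4) s by blast
          next
            case False
            then have ta: "t = ttr F B1 B w" using b(4) by blast
            have B1: "subgroup B1 G" and B1B: "B1 \<subseteq> B" using E1(1) sub2_sg by auto
            show ?thesis unfolding ta
            proof (rule RT[OF Z s2 E1(1) wc sc])
              fix S'' g'' assume c: "subgroup S'' G" "S'' \<subseteq> M" "g'' \<in> M"
              have g''c: "g'' \<in> carrier G" using c(3) sg_sub[OF M] by blast
              have gB1: "subgroup (conjset G g'' B1) G" using GG.conjset_sub[OF g''c B1] .
              have M'': "subgroup (S'' \<inter> conjset G g'' B1) G" using GG.subgroups_Inter_pair[OF c(1) gB1] .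
              have p1: "sub2 G (S'' \<inter> conjset G g'' B1) (conjset G g'' B1)" using M'' gB1 by (auto simp: sub2_def)
              have p2: "sub2 G (S'' \<inter> conjset G g'' B1) S''" using M'' c by (auto simp: sub2_def)
              have p3: "sub2 G S'' M" using c M by (auto simp: sub2_def)
              show "tres F M S'' s \<otimes>\<^bsub>tT F S''\<^esub> tnm F (S'' \<inter> conjset G g'' B1) S'' (tres F (conjset G g'' B1) (S'' \<inter> conjset G g'' B1) (tcj F g'' B1 w)) \<in> Z S''"
              proof (rule Sdiv_use[OF Sd Z p3 s])
                show "tnm F (S'' \<inter> conjset G g'' B1) S'' (tres F (conjset G g'' B1) (S'' \<inter> conjset G g'' B1) (tcj F g'' B1 w)) \<in> carrier (tT F S'')"
                  using nm_car[OF p2 res_car[OF p1 cj_car[OF g''c B1 wc]]] .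
                fix s' assume "s' \<in> S S''"
                then show "s' \<otimes>\<^bsub>tT F S''\<^esub> tnm F (S'' \<inter> conjset G g'' B1) S'' (tres F (conjset G g'' B1) (S'' \<inter> conjset G g'' B1) (tcj F g'' B1 w)) \<in> Z S''"
                  using ColD[OF E1(2) g''c c(1) M''] by blast
              qed
            qed
          qed
          show ?thesis unfolding i r1 using True r0 goal n1 by simp
        next
          case False
          have finM: "finite M" using finite_subset[OF sg_sub[OF M] finG] .
          have lt: "card S' < card M" using psubset_card_mono[OF finM] b(2) False by blast
          have rE: "tres F (conjset G g' B) (S' \<inter> conjset G g' B) (tcj F g' B t) \<in> Eset S Z (S' \<inter> conjset G g' B)"
            using E_res[OF Z q1 E_cj[OF g'c B tE]] .
          show ?thesis
          proof (rule Sdiv_use[OF Sd Z q3 s])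
            show "tnm F (S' \<inter> conjset G g' B) S' (tres F (conjset G g' B) (S' \<inter> conjset G g' B) (tcj F g' B t)) \<in> carrier (tT F S')"
              using nm_car[OF q2 res_car[OF q1 cj_car[OF g'c B tc]]] .
            fix s' assume s': "s' \<in> S S'"
            show "s' \<otimes>\<^bsub>tT F S'\<^esub> tnm F (S' \<inter> conjset G g' B) S' (tres F (conjset G g' B) (S' \<inter> conjset G g' B) (tcj F g' B t)) \<in> Z S'"
              by (rule less.hyps[OF lt b(1) q2 rE s'])
          qed
        qed
      qed
    qed
  qed
  then show ?case using less.prems(4) by blast
qed

lemma Col_tr:
  assumes Z: "tideal G F Z" and Sd: "Sdiv S" and KL: "sub2 G K L" and u: "u \<in> Col S Z K"
  shows "ttr F K L u \<in> Col S Z L"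
proof (rule ColI)
  have K: "subgroup K G" and L: "subgroup L G" using KL sub2_sg by auto
  have uc: "u \<in> carrier (tT F K)" using Col_car[OF u] .
  show "ttr F K L u \<in> carrier (tT F L)" using tr_car[OF KL uc] .
  fix g M B s assume a: "g \<in> carrier G" "subgroup M G" "subgroup B G" "B \<subseteq> M" "B \<subseteq> conjset G g L" "s \<in> S M"
  define K' where "K' = conjset G g K"
  define L' where "L' = conjset G g L"
  have L': "subgroup L' G" unfolding L'_def using GG.conjset_sub[OF a(1) L] .
  have K': "subgroup K' G" unfolding K'_def using GG.conjset_sub[OF a(1) K] .
  have KL': "sub2 G K' L'" unfolding K'_def L'_def using GG.conjset_sub2[OF a(1) KL] .
  have K'L': "K' \<subseteq> L'" using KL' sub2_sg by auto
  have s2: "sub2 G B L'" using a L' unfolding L'_def by (simp add: sub2_def)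
  have s3: "sub2 G B M" using a by (simp add: sub2_def)
  define w where "w = tcj F g K u"
  have wC: "w \<in> Col S Z K'" unfolding w_def K'_def using Col_cj[OF u K a(1)] .
  have wc: "w \<in> carrier (tT F K')" using Col_car[OF wC] .
  have e1: "tcj F g L (ttr F K L u) = ttr F K' L' w" unfolding w_def K'_def L'_def using cj_tr[OF a(1) KL uc] .
  have vE: "tres F L' B (ttr F K' L' w) \<in> Eset S Z B"
    unfolding mackey_tr[OF s2 KL' wc] Let_def
  proof (rule E_finsum[OF a(3)])
    fix D assume D: "D \<in> dcosets G L' B K'"
    have hB: "crep D \<in> L'" using GG.crep_dc[OF L' a(3) K' _ K'L' D] s2 sub2_sg by auto
    have hc: "crep D \<in> carrier G" using hB sg_sub[OF L'] by blast
    have gB: "subgroup (conjset G (crep D) K') G" using GG.conjset_sub[OF hc K'] .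
    have M': "subgroup (B \<inter> conjset G (crep D) K') G" using GG.subgroups_Inter_pair[OF a(3) gB] .
    have q1: "sub2 G (B \<inter> conjset G (crep D) K') (conjset G (crep D) K')" using M' gB by (auto simp: sub2_def)
    have q2: "sub2 G (B \<inter> conjset G (crep D) K') B" using M' a(3) by (auto simp: sub2_def)
    show "ttr F (B \<inter> conjset G (crep D) K') B (tres F (conjset G (crep D) K') (B \<inter> conjset G (crep D) K') (tcj F (crep D) K' w)) \<in> Eset S Z B"
      by (rule E_tr[OF q2 Col_res[OF Col_cj[OF wC K' hc] q1]])
  qed
  show "s \<otimes>\<^bsub>tT F M\<^esub> tnm F B M (tres F (conjset G g L) B (tcj F g L (ttr F K L u))) \<in> Z M"
    unfolding e1 L'_def[symmetric] by (rule Claim[OF Z Sd a(2) s3 vE a(6)])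
qed

lemma Col_tideal:
  assumes Z: "tideal G F Z" and Sd: "Sdiv S"
  shows "tideal G F (Col S Z)"
  unfolding tideal_def
proof (intro conjI allI impI)
  fix H assume H: "subgroup H G"
  show "ideal (Col S Z H) (tT F H)"
  proof (rule ideal_crit[OF cr[OF H]])
    show "Col S Z H \<subseteq> carrier (tT F H)" using Col_car by blast
    show "\<zero>\<^bsub>tT F H\<^esub> \<in> Col S Z H" by (rule Col_zero[OF Z Sd H])
    show "a \<oplus>\<^bsub>tT F H\<^esub> b \<in> Col S Z H" if "a \<in> Col S Z H" "b \<in> Col S Z H" for a b
      by (rule Col_add[OF Z Sd H that])
    show "x \<otimes>\<^bsub>tT F H\<^esub> a \<in> Col S Z H" if "a \<in> Col S Z H" "x \<in> carrier (tT F H)" for a x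
      by (rule Col_mult[OF Z Sd H that])
  qed
next
  fix H K assume KH: "sub2 G K H"
  show "tres F H K ` Col S Z H \<subseteq> Col S Z K" using Col_res[OF _ KH] by blast
  show "ttr F K H ` Col S Z K \<subseteq> Col S Z H" using Col_tr[OF Z Sd KH] by blast
  show "tnm F K H ` Col S Z K \<subseteq> Col S Z H" using Col_nm[OF Z Sd KH] by blast
next
  fix g H assume "g \<in> carrier G" "subgroup H G"
  then show "tcj F g H ` Col S Z H \<subseteq> Col S Z (conjset G g H)" using Col_cj by blast
qed

end

context tamb
begin

lemma tprod_ok: "tideal G F A \<Longrightarrow> tideal G F B \<Longrightarrow>
  okgen {(H, a \<otimes>\<^bsub>tT F H\<^esub> b) | H a b. subgroup H G \<and> a \<in> A H \<and> b \<in> B H}"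
  unfolding okgen_def
proof (intro ballI)
  fix p assume AB: "tideal G F A" "tideal G F B" and p: "p \<in> {(H, a \<otimes>\<^bsub>tT F H\<^esub> b) | H a b. subgroup H G \<and> a \<in> A H \<and> b \<in> B H}"
  then obtain H a b where q: "p = (H, a \<otimes>\<^bsub>tT F H\<^esub> b)" "subgroup H G" "a \<in> A H" "b \<in> B H" by blast
  have "a \<otimes>\<^bsub>tT F H\<^esub> b \<in> carrier (tT F H)"
    using tideal_car[OF AB(1) q(2,3)] tideal_car[OF AB(2) q(2,4)] cr[OF q(2)] by (simp add: cring.axioms(1) ring.ring_simprules(5))
  then show "case p of (K, z) \<Rightarrow> subgroup K G \<and> z \<in> carrier (tT F K)" using q by simp
qed

lemma tprod_tideal: "tideal G F A \<Longrightarrow> tideal G F B \<Longrightarrow> tideal G F (tprod G F A B)"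
  unfolding tprod_def by (rule tgen_tideal[OF tprod_ok])

lemma tprod_mem: "subgroup H G \<Longrightarrow> a \<in> A H \<Longrightarrow> b \<in> B H \<Longrightarrow> a \<otimes>\<^bsub>tT F H\<^esub> b \<in> tprod G F A B H"
  unfolding tprod_def by (rule tgen_gen) blast

lemma tprod_min:
  assumes "tideal G F W" "\<And>H a b. subgroup H G \<Longrightarrow> a \<in> A H \<Longrightarrow> b \<in> B H \<Longrightarrow> a \<otimes>\<^bsub>tT F H\<^esub> b \<in> W H"
  shows "tprod G F A B H \<subseteq> W H"
  unfolding tprod_def by (rule tgen_min[OF assms(1)]) (use assms(2) in blast)

lemma tprod_mono:
  assumes "\<And>H. subgroup H G \<Longrightarrow> A H \<subseteq> A' H" "\<And>H. subgroup H G \<Longrightarrow> B H \<subseteq> B' H"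
  shows "tprod G F A B H \<subseteq> tprod G F A' B' H"
  unfolding tprod_def by (rule tgen_mono) (use assms in blast)

lemma tprod_sub1: "tideal G F A \<Longrightarrow> tideal G F B \<Longrightarrow> tprod G F A B H \<subseteq> A H"
  by (rule tprod_min) (auto intro: id_rm tideal_id tideal_car)

lemma tprod_sub2: "tideal G F A \<Longrightarrow> tideal G F B \<Longrightarrow> tprod G F A B H \<subseteq> B H"
  by (rule tprod_min) (auto intro: id_lm tideal_id tideal_car)

lemma adj:
  assumes Z: "tideal G F Z" and P: "tideal G F P" and Q: "\<And>H. subgroup H G \<Longrightarrow> Q H \<subseteq> Col P Z H"
  shows "tprod G F Q P H \<subseteq> Z H"
proof (rule tprod_min[OF Z])
  fix H q p assume a: "subgroup H G" "q \<in> Q H" "p \<in> P H"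
  have qC: "q \<in> Col P Z H" using Q[OF a(1)] a(2) by blast
  have "p \<otimes>\<^bsub>tT F H\<^esub> q \<in> Z H" by (rule Col_unit[OF qC a(1) a(3)])
  moreover have "p \<otimes>\<^bsub>tT F H\<^esub> q = q \<otimes>\<^bsub>tT F H\<^esub> p"
    using cr[OF a(1)] tideal_car[OF P a(1) a(3)] Col_car[OF qC] by (simp add: cring.cring_simprules(14))
  ultimately show "q \<otimes>\<^bsub>tT F H\<^esub> p \<in> Z H" by simp
qed

lemma assoc:
  assumes A: "tideal G F A" and B: "tideal G F B" and C: "tideal G F C"
  shows "tprod G F (tprod G F A B) C H \<subseteq> tprod G F A (tprod G F B C) H"
proof -
  define W where "W = tprod G F A (tprod G F B C)"
  have BC: "tideal G F (tprod G F B C)" by (rule tprod_tideal[OF B C])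
  have W: "tideal G F W" unfolding W_def by (rule tprod_tideal[OF A BC])
  have CT: "tideal G F (Col C W)" by (rule Col_tideal[OF W tideal_Sdiv[OF C]])
  have AB: "tprod G F A B H' \<subseteq> Col C W H'" for H'
  proof (rule tprod_min[OF CT])
    fix L a b assume q: "subgroup L G" "a \<in> A L" "b \<in> B L"
    have ac: "a \<in> carrier (tT F L)" using tideal_car[OF A q(1,2)] .
    have bc: "b \<in> carrier (tT F L)" using tideal_car[OF B q(1,3)] .
    show "a \<otimes>\<^bsub>tT F L\<^esub> b \<in> Col C W L"
    proof (rule ColI)
      show "a \<otimes>\<^bsub>tT F L\<^esub> b \<in> carrier (tT F L)" using cr[OF q(1)] ac bc by (simp add: cring.axioms(1) ring.ring_simprules(5))
      fix g M B' c assume r: "g \<in> carrier G" "subgroup M G" "subgroup B' G" "B' \<subseteq> M" "B' \<subseteq> conjset G g L" "c \<in> C M"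
      have gL: "subgroup (conjset G g L) G" using GG.conjset_sub[OF r(1) q(1)] .
      have s2: "sub2 G B' (conjset G g L)" using r gL by (simp add: sub2_def)
      have s3: "sub2 G B' M" using r by (simp add: sub2_def)
      interpret M: cring "tT F M" using cr[OF r(2)] .
      define x where "x = tres F (conjset G g L) B' (tcj F g L a)"
      define y where "y = tres F (conjset G g L) B' (tcj F g L b)"
      have xA: "x \<in> A B'" unfolding x_def using tideal_res[OF A s2 tideal_cj[OF A r(1) q(1) q(2)]] .
      have yB: "y \<in> B B'" unfolding y_def using tideal_res[OF B s2 tideal_cj[OF B r(1) q(1) q(3)]] .
      have xc: "x \<in> carrier (tT F B')" using tideal_car[OF A r(3) xA] .
      have yc: "y \<in> carrier (tT F B')" using tideal_car[OF B r(3) yB] .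
      have e: "tres F (conjset G g L) B' (tcj F g L (a \<otimes>\<^bsub>tT F L\<^esub> b)) = x \<otimes>\<^bsub>tT F B'\<^esub> y"
        unfolding x_def y_def using cj_mult[OF r(1) q(1) ac bc] res_mult[OF s2 cj_car[OF r(1) q(1) ac] cj_car[OF r(1) q(1) bc]] by simp
      have NxA: "tnm F B' M x \<in> A M" using tideal_nm[OF A s3 xA] .
      have NyB: "tnm F B' M y \<in> B M" using tideal_nm[OF B s3 yB] .
      have cc: "c \<in> carrier (tT F M)" using tideal_car[OF C r(2) r(6)] .
      have Nxc: "tnm F B' M x \<in> carrier (tT F M)" using nm_car[OF s3 xc] .
      have Nyc: "tnm F B' M y \<in> carrier (tT F M)" using nm_car[OF s3 yc] .
      have "c \<otimes>\<^bsub>tT F M\<^esub> tnm F B' M (x \<otimes>\<^bsub>tT F B'\<^esub> y) = tnm F B' M x \<otimes>\<^bsub>tT F M\<^esub> (tnm F B' M y \<otimes>\<^bsub>tT F M\<^esub> c)"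
        using nm_mult[OF s3 xc yc] cc Nxc Nyc by (simp add: M.m_ac)
      moreover have "tnm F B' M y \<otimes>\<^bsub>tT F M\<^esub> c \<in> tprod G F B C M" by (rule tprod_mem[where A=B and B=C, OF r(2) NyB r(6)])
      ultimately have "c \<otimes>\<^bsub>tT F M\<^esub> tnm F B' M (x \<otimes>\<^bsub>tT F B'\<^esub> y) \<in> W M"
        unfolding W_def using tprod_mem[where A=A and B="tprod G F B C", OF r(2) NxA] by simp
      then show "c \<otimes>\<^bsub>tT F M\<^esub> tnm F B' M (tres F (conjset G g L) B' (tcj F g L (a \<otimes>\<^bsub>tT F L\<^esub> b))) \<in> W M"
        unfolding e .
    qed
  qed
  have "tprod G F (tprod G F A B) C H \<subseteq> W H" by (rule adj[OF W C AB])
  then show ?thesis unfolding W_def .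
qed

lemma tpow_Suc: "1 \<le> n \<Longrightarrow> tpow G F I (Suc n) = tprod G F (tpow G F I n) I"
  by (cases n) auto

lemma tpow_tideal: "tideal G F P \<Longrightarrow> 1 \<le> n \<Longrightarrow> tideal G F (tpow G F P n)"
proof (induction n)
  case 0 then show ?case by simp
next
  case (Suc n)
  show ?case
  proof (cases "n = 0")
    case True then show ?thesis using Suc by simp
  next
    case False
    then show ?thesis using Suc tpow_Suc[of n] tprod_tideal by simp
  qed
qed

lemma tpow_add:
  assumes P: "tideal G F P" and j: "1 \<le> j"
  shows "1 \<le> m \<Longrightarrow> tpow G F P (j + m) H \<subseteq> tprod G F (tpow G F P j) (tpow G F P m) H"
proof (induction m arbitrary: H)
  case 0 then show ?case by simp
next
  case (Suc m)
  show ?case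
  proof (cases "m = 0")
    case True
    then show ?thesis using tpow_Suc[OF j] by simp
  next
    case False
    then have m1: "1 \<le> m" by simp
    have "tpow G F P (j + Suc m) H = tprod G F (tpow G F P (j + m)) P H"
      using tpow_Suc[of "j + m" P] m1 by simp
    also have "\<dots> \<subseteq> tprod G F (tprod G F (tpow G F P j) (tpow G F P m)) P H"
      by (rule tprod_mono) (use Suc.IH[OF m1] in auto)
    also have "\<dots> \<subseteq> tprod G F (tpow G F P j) (tprod G F (tpow G F P m) P) H"
      by (rule assoc[OF tpow_tideal[OF P j] tpow_tideal[OF P m1] P])
    also have "\<dots> = tprod G F (tpow G F P j) (tpow G F P (Suc m)) H"
      using tpow_Suc[OF m1, of P] by simp
    finally show ?thesis .
  qed
qed

end

context tamb
begin

definition SN :: "('g set \<times> 'a) list \<Rightarrow> 'g set \<Rightarrow> 'a set" where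
  "SN xs M = {tnm F B M (tres F (conjset G g H) B (tcj F g H x)) | g B H x.
      (H, x) \<in> set xs \<and> g \<in> carrier G \<and> subgroup B G \<and> B \<subseteq> M \<and> B \<subseteq> conjset G g H}"

lemma SN_intro: "(H, x) \<in> set xs \<Longrightarrow> g \<in> carrier G \<Longrightarrow> subgroup B G \<Longrightarrow> B \<subseteq> M \<Longrightarrow> B \<subseteq> conjset G g H \<Longrightarrow>
   tnm F B M (tres F (conjset G g H) B (tcj F g H x)) \<in> SN xs M"
  unfolding SN_def
  apply (rule CollectI, rule exI[of _ g], rule exI[of _ B], rule exI[of _ H], rule exI[of _ x])
  by simp

lemma SN_elim:
  assumes "s \<in> SN xs M"
  obtains g B H x where "(H, x) \<in> set xs" "g \<in> carrier G" "subgroup B G" "B \<subseteq> M" "B \<subseteq> conjset G g H"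
    "s = tnm F B M (tres F (conjset G g H) B (tcj F g H x))"
  using assms unfolding SN_def mem_Collect_eq by (elim exE conjE) (rule that; assumption)

lemma okgenD: "okgen S \<Longrightarrow> (H, x) \<in> S \<Longrightarrow> subgroup H G" "okgen S \<Longrightarrow> (H, x) \<in> S \<Longrightarrow> x \<in> carrier (tT F H)"
  unfolding okgen_def by auto

lemma SN_in:
  assumes ok: "okgen (set xs)" and M: "subgroup M G" and s: "s \<in> SN xs M"
  shows "s \<in> tgen G F (set xs) M"
proof -
  obtain g B H x where q: "(H, x) \<in> set xs" "g \<in> carrier G" "subgroup B G" "B \<subseteq> M" "B \<subseteq> conjset G g H"
    "s = tnm F B M (tres F (conjset G g H) B (tcj F g H x))" by (rule SN_elim[OF s])
  have X: "tideal G F (tgen G F (set xs))" by (rule tgen_tideal[OF ok])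
  have H: "subgroup H G" using okgenD(1)[OF ok q(1)] .
  have gH: "subgroup (conjset G g H) G" using GG.conjset_sub[OF q(2) H] .
  have s2: "sub2 G B (conjset G g H)" using q gH by (simp add: sub2_def)
  have s3: "sub2 G B M" using q M by (simp add: sub2_def)
  have "x \<in> tgen G F (set xs) H" by (rule tgen_gen[OF q(1)])
  then show ?thesis unfolding q(6) by (rule tideal_nm[OF X s3 tideal_res[OF X s2 tideal_cj[OF X q(2) H]]])
qed

lemma SN_car:
  assumes ok: "okgen (set xs)" and M: "subgroup M G" and s: "s \<in> SN xs M"
  shows "s \<in> carrier (tT F M)"
  using tideal_car[OF tgen_tideal[OF ok] M SN_in[OF ok M s]] .

lemma SN_Sdiv:
  assumes ok: "okgen (set xs)"
  shows "Sdiv (SN xs)"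
  unfolding Sdiv_def
proof (intro conjI allI impI)
  fix M assume "subgroup M G"
  then show "SN xs M \<subseteq> carrier (tT F M)" using SN_car[OF ok] by blast
next
  fix M K s assume KM: "sub2 G K M" and s: "s \<in> SN xs M"
  have K: "subgroup K G" and M: "subgroup M G" and KsM: "K \<subseteq> M" using KM sub2_sg by auto
  obtain g B H x where q: "(H, x) \<in> set xs" "g \<in> carrier G" "subgroup B G" "B \<subseteq> M" "B \<subseteq> conjset G g H"
    and se: "s = tnm F B M (tres F (conjset G g H) B (tcj F g H x))" by (rule SN_elim[OF s])
  have H: "subgroup H G" using okgenD(1)[OF ok q(1)] .
  have xc: "x \<in> carrier (tT F H)" using okgenD(2)[OF ok q(1)] .
  have gH: "subgroup (conjset G g H) G" using GG.conjset_sub[OF q(2) H] .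
  have s2: "sub2 G B (conjset G g H)" using q gH by (simp add: sub2_def)
  have s3: "sub2 G B M" using q M by (simp add: sub2_def)
  define v where "v = tres F (conjset G g H) B (tcj F g H x)"
  have vc: "v \<in> carrier (tT F B)" unfolding v_def using res_car[OF s2 cj_car[OF q(2) H xc]] .
  define Fn where "Fn = (\<lambda>D. tnm F (K \<inter> conjset G (crep D) B) K (tres F (conjset G (crep D) B) (K \<inter> conjset G (crep D) B) (tcj F (crep D) B v)))"
  define A where "A = dcosets G M K B"
  have e: "tres F M K s = finprod (tT F K) Fn A"
    unfolding se v_def[symmetric] mackey_nm[OF KM s3 vc] Fn_def A_def Let_def ..
  have Afin: "finite A" unfolding A_def using GG.dcosets_fin[OF finG sg_sub[OF M]] .
  obtain D0 where D0: "D0 \<in> A" unfolding A_def using GG.dcosets_ne[OF M] by blast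
  have hM: "crep D \<in> M" if "D \<in> A" for D using GG.crep_dc[OF M K q(3) KsM q(4)] that unfolding A_def .
  have hc: "crep D \<in> carrier G" if "D \<in> A" for D using hM[OF that] sg_sub[OF M] by blast
  have Fc: "Fn D \<in> carrier (tT F K)" if D: "D \<in> A" for D
  proof -
    have gB: "subgroup (conjset G (crep D) B) G" using GG.conjset_sub[OF hc[OF D] q(3)] .
    have M': "subgroup (K \<inter> conjset G (crep D) B) G" using GG.subgroups_Inter_pair[OF K gB] .
    have q1: "sub2 G (K \<inter> conjset G (crep D) B) (conjset G (crep D) B)" using M' gB by (auto simp: sub2_def)
    have q2: "sub2 G (K \<inter> conjset G (crep D) B) K" using M' K by (auto simp: sub2_def)
    show ?thesis unfolding Fn_def using nm_car[OF q2 res_car[OF q1 cj_car[OF hc[OF D] q(3) vc]]] .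
  qed
  have Fcp: "Fn \<in> A \<rightarrow> carrier (tT F K)" using Fc by auto
  note sp = finprod_split[OF cr[OF K] Afin D0 Fcp]
  define h where "h = crep D0"
  have hc0: "h \<in> carrier G" unfolding h_def using hc[OF D0] .
  have hg: "h \<otimes>\<^bsub>G\<^esub> g \<in> carrier G" using hc0 q(2) by simp
  define B'' where "B'' = K \<inter> conjset G h B"
  have hB: "subgroup (conjset G h B) G" using GG.conjset_sub[OF hc0 q(3)] .
  have B'': "subgroup B'' G" unfolding B''_def using GG.subgroups_Inter_pair[OF K hB] .
  have cc: "conjset G h (conjset G g H) = conjset G (h \<otimes>\<^bsub>G\<^esub> g) H" using GG.conjset_comp[OF hc0 q(2) sg_sub[OF H]] .
  have t1: "sub2 G (conjset G h B) (conjset G (h \<otimes>\<^bsub>G\<^esub> g) H)" using GG.conjset_sub2[OF hc0 s2] cc by simp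
  have t2: "sub2 G B'' (conjset G h B)" using B'' hB unfolding B''_def by (auto simp: sub2_def)
  have xg: "tcj F g H x \<in> carrier (tT F (conjset G g H))" using cj_car[OF q(2) H xc] .
  have "tcj F h B v = tres F (conjset G h (conjset G g H)) (conjset G h B) (tcj F h (conjset G g H) (tcj F g H x))"
    unfolding v_def using cj_res[OF hc0 s2 xg] .
  also have "\<dots> = tres F (conjset G (h \<otimes>\<^bsub>G\<^esub> g) H) (conjset G h B) (tcj F (h \<otimes>\<^bsub>G\<^esub> g) H x)"
    using cc cj_comp[OF hc0 q(2) H xc] by simp
  finally have e1: "tcj F h B v = tres F (conjset G (h \<otimes>\<^bsub>G\<^esub> g) H) (conjset G h B) (tcj F (h \<otimes>\<^bsub>G\<^esub> g) H x)" .
  have e2: "tres F (conjset G h B) B'' (tcj F h B v) = tres F (conjset G (h \<otimes>\<^bsub>G\<^esub> g) H) B'' (tcj F (h \<otimes>\<^bsub>G\<^esub> g) H x)"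
    unfolding e1 by (rule res_comp[OF t1 t2 cj_car[OF hg H xc]])
  have B''s: "B'' \<subseteq> conjset G (h \<otimes>\<^bsub>G\<^esub> g) H" using t1 t2 by (auto simp: sub2_def)
  have "Fn D0 = tnm F B'' K (tres F (conjset G (h \<otimes>\<^bsub>G\<^esub> g) H) B'' (tcj F (h \<otimes>\<^bsub>G\<^esub> g) H x))"
    unfolding Fn_def h_def[symmetric] B''_def[symmetric] e2 ..
  also have "\<dots> \<in> SN xs K" by (rule SN_intro[OF q(1) hg B'' _ B''s]) (simp add: B''_def)
  finally have F0: "Fn D0 \<in> SN xs K" .
  have "tres F M K s = finprod (tT F K) Fn (A - {D0}) \<otimes>\<^bsub>tT F K\<^esub> Fn D0"
    unfolding e sp(1) using sp(2) Fc[OF D0] cr[OF K] by (simp add: cring.cring_simprules(14))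
  then show "\<exists>r\<in>carrier (tT F K). \<exists>s'\<in>SN xs K. tres F M K s = r \<otimes>\<^bsub>tT F K\<^esub> s'"
    using sp(2) F0 by (intro bexI[of _ "finprod (tT F K) Fn (A - {D0})"] bexI[of _ "Fn D0"])
qed

end

context tamb
begin

definition Zset :: "('g set \<times> 'a) list \<Rightarrow> ('g set \<times> 'a) list \<Rightarrow> ('g set \<times> 'a) set" where
  "Zset xs ys = {(M, s \<otimes>\<^bsub>tT F M\<^esub> t) | M s t. subgroup M G \<and> s \<in> SN xs M \<and> t \<in> SN ys M}"

lemma Zset_memI: "subgroup M G \<Longrightarrow> s \<in> SN xs M \<Longrightarrow> t \<in> SN ys M \<Longrightarrow> (M, s \<otimes>\<^bsub>tT F M\<^esub> t) \<in> Zset xs ys"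
  unfolding Zset_def
  apply (rule CollectI, rule exI[of _ M], rule exI[of _ s], rule exI[of _ t])
  by simp

lemma Zset_elim:
  assumes "p \<in> Zset xs ys"
  obtains M s t where "p = (M, s \<otimes>\<^bsub>tT F M\<^esub> t)" "subgroup M G" "s \<in> SN xs M" "t \<in> SN ys M"
  using assms unfolding Zset_def mem_Collect_eq by (elim exE conjE) (rule that; assumption)

lemma Zset_fin: "finite (Zset xs ys)"
proof -
  define C where "C = carrier G"
  define f where "f = (\<lambda>(M, (g, B, (H, x)), (g', B', (K, y))).
      (M, tnm F B M (tres F (conjset G g H) B (tcj F g H x)) \<otimes>\<^bsub>tT F M\<^esub> tnm F B' M (tres F (conjset G g' K) B' (tcj F g' K y))))"
  have sub: "Zset xs ys \<subseteq> f ` (Pow C \<times> (C \<times> Pow C \<times> set xs) \<times> (C \<times> Pow C \<times> set ys))"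
  proof
    fix p assume "p \<in> Zset xs ys"
    then obtain M s t where p: "p = (M, s \<otimes>\<^bsub>tT F M\<^esub> t)" "subgroup M G" "s \<in> SN xs M" "t \<in> SN ys M"
      by (rule Zset_elim)
    obtain g B H x where a: "(H, x) \<in> set xs" "g \<in> carrier G" "subgroup B G" "B \<subseteq> M" "B \<subseteq> conjset G g H"
      "s = tnm F B M (tres F (conjset G g H) B (tcj F g H x))" by (rule SN_elim[OF p(3)])
    obtain g' B' K y where b: "(K, y) \<in> set ys" "g' \<in> carrier G" "subgroup B' G" "B' \<subseteq> M" "B' \<subseteq> conjset G g' K"
      "t = tnm F B' M (tres F (conjset G g' K) B' (tcj F g' K y))" by (rule SN_elim[OF p(4)])
    have MC: "M \<subseteq> C" unfolding C_def using sg_sub[OF p(2)] .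
    have BC: "B \<subseteq> C" using a(4) MC by (rule order.trans)
    have B'C: "B' \<subseteq> C" using b(4) MC by (rule order.trans)
    have gC: "g \<in> C" "g' \<in> C" unfolding C_def using a(2) b(2) by auto
    have mem: "(M, (g, B, (H, x)), (g', B', (K, y))) \<in> Pow C \<times> (C \<times> Pow C \<times> set xs) \<times> (C \<times> Pow C \<times> set ys)"
      using MC BC B'C gC a(1) b(1) by (simp only: mem_Times_iff fst_conv snd_conv Pow_iff)
    have "p = f (M, (g, B, (H, x)), (g', B', (K, y)))" unfolding f_def using p(1) a(6) b(6) by simp
    then show "p \<in> f ` (Pow C \<times> (C \<times> Pow C \<times> set xs) \<times> (C \<times> Pow C \<times> set ys))"
      using mem by (rule image_eqI)
  qed
  have fin: "finite (Pow C \<times> (C \<times> Pow C \<times> set xs) \<times> (C \<times> Pow C \<times> set ys))"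
    unfolding C_def using finG by (intro finite_cartesian_product finite_Pow_iff[THEN iffD2] List.finite_set)
  show ?thesis by (rule finite_subset[OF sub finite_imageI[OF fin]])
qed

lemma Zset_ok:
  assumes "okgen (set xs)" "okgen (set ys)"
  shows "okgen (Zset xs ys)"
  unfolding okgen_def
proof (intro ballI)
  fix p assume "p \<in> Zset xs ys"
  then obtain M s t where p: "p = (M, s \<otimes>\<^bsub>tT F M\<^esub> t)" "subgroup M G" "s \<in> SN xs M" "t \<in> SN ys M"
    by (rule Zset_elim)
  have "s \<otimes>\<^bsub>tT F M\<^esub> t \<in> carrier (tT F M)"
    using SN_car[OF assms(1) p(2,3)] SN_car[OF assms(2) p(2,4)] cr[OF p(2)] by (simp add: cring.axioms(1) ring.ring_simprules(5))
  then show "case p of (K, z) \<Rightarrow> subgroup K G \<and> z \<in> carrier (tT F K)" using p by simp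
qed

lemma Zset_mem: "subgroup M G \<Longrightarrow> s \<in> SN xs M \<Longrightarrow> t \<in> SN ys M \<Longrightarrow> s \<otimes>\<^bsub>tT F M\<^esub> t \<in> tgen G F (Zset xs ys) M"
  by (rule tgen_gen[OF Zset_memI])

lemma main:
  assumes okx: "okgen (set xs)" and oky: "okgen (set ys)"
  shows "\<exists>zs. okgen (set zs) \<and> (\<forall>H. subgroup H G \<longrightarrow>
     trad G F (tgen G F (set xs)) H \<inter> trad G F (tgen G F (set ys)) H = trad G F (tgen G F (set zs)) H)"
proof -
  define Xi where "Xi = tgen G F (set xs)"
  define Yi where "Yi = tgen G F (set ys)"
  define Zs where "Zs = Zset xs ys"
  define Zi where "Zi = tgen G F Zs"
  have Xt: "tideal G F Xi" unfolding Xi_def by (rule tgen_tideal[OF okx])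
  have Yt: "tideal G F Yi" unfolding Yi_def by (rule tgen_tideal[OF oky])
  have okz: "okgen Zs" unfolding Zs_def by (rule Zset_ok[OF okx oky])
  have Zt: "tideal G F Zi" unfolding Zi_def by (rule tgen_tideal[OF okz])
  have ZX: "Zi L \<subseteq> Xi L" for L
    unfolding Zi_def
  proof (rule tgen_min[OF Xt])
    fix M z assume "(M, z) \<in> Zs"
    then obtain M' s t where p0: "(M, z) = (M', s \<otimes>\<^bsub>tT F M'\<^esub> t)" "subgroup M' G" "s \<in> SN xs M'" "t \<in> SN ys M'"
      unfolding Zs_def by (rule Zset_elim)
    then have p: "z = s \<otimes>\<^bsub>tT F M\<^esub> t" "subgroup M G" "s \<in> SN xs M" "t \<in> SN ys M" by auto
    show "z \<in> Xi M" unfolding p(1) Xi_def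
      by (rule id_rm[OF tideal_id[OF tgen_tideal[OF okx] p(2)] SN_in[OF okx p(2,3)] SN_car[OF oky p(2,4)]])
  qed
  have ZY: "Zi L \<subseteq> Yi L" for L
    unfolding Zi_def
  proof (rule tgen_min[OF Yt])
    fix M z assume "(M, z) \<in> Zs"
    then obtain M' s t where p0: "(M, z) = (M', s \<otimes>\<^bsub>tT F M'\<^esub> t)" "subgroup M' G" "s \<in> SN xs M'" "t \<in> SN ys M'"
      unfolding Zs_def by (rule Zset_elim)
    then have p: "z = s \<otimes>\<^bsub>tT F M\<^esub> t" "subgroup M G" "s \<in> SN xs M" "t \<in> SN ys M" by auto
    show "z \<in> Yi M" unfolding p(1) Yi_def
      by (rule id_lm[OF tideal_id[OF tgen_tideal[OF oky] p(2)] SN_in[OF oky p(2,4)] SN_car[OF okx p(2,3)]])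
  qed
  have CT1: "tideal G F (Col (SN xs) Zi)" by (rule Col_tideal[OF Zt SN_Sdiv[OF okx]])
  have st1: "Yi L \<subseteq> Col (SN xs) Zi L" for L
    unfolding Yi_def
  proof (rule tgen_min[OF CT1])
    fix K y assume ky: "(K, y) \<in> set ys"
    have K: "subgroup K G" using okgenD(1)[OF oky ky] .
    show "y \<in> Col (SN xs) Zi K"
    proof (rule ColI)
      show "y \<in> carrier (tT F K)" using okgenD(2)[OF oky ky] .
      fix g M B s assume a: "g \<in> carrier G" "subgroup M G" "subgroup B G" "B \<subseteq> M" "B \<subseteq> conjset G g K" "s \<in> SN xs M"
      have tS: "tnm F B M (tres F (conjset G g K) B (tcj F g K y)) \<in> SN ys M" by (rule SN_intro[OF ky a(1) a(3) a(4) a(5)])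
      show "s \<otimes>\<^bsub>tT F M\<^esub> tnm F B M (tres F (conjset G g K) B (tcj F g K y)) \<in> Zi M"
        unfolding Zi_def Zs_def by (rule Zset_mem[OF a(2) a(6) tS])
    qed
  qed
  have CT2: "tideal G F (Col Yi Zi)" by (rule Col_tideal[OF Zt tideal_Sdiv[OF Yt]])
  have st2: "Xi L \<subseteq> Col Yi Zi L" for L
    unfolding Xi_def
  proof (rule tgen_min[OF CT2])
    fix H x assume hx: "(H, x) \<in> set xs"
    have H: "subgroup H G" using okgenD(1)[OF okx hx] .
    show "x \<in> Col Yi Zi H"
    proof (rule ColI)
      show "x \<in> carrier (tT F H)" using okgenD(2)[OF okx hx] .
      fix g M B q assume a: "g \<in> carrier G" "subgroup M G" "subgroup B G" "B \<subseteq> M" "B \<subseteq> conjset G g H" "q \<in> Yi M"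
      have sS: "tnm F B M (tres F (conjset G g H) B (tcj F g H x)) \<in> SN xs M" by (rule SN_intro[OF hx a(1) a(3) a(4) a(5)])
      have qC: "q \<in> Col (SN xs) Zi M" by (rule subsetD[OF st1 a(6)])
      have "tnm F B M (tres F (conjset G g H) B (tcj F g H x)) \<otimes>\<^bsub>tT F M\<^esub> q \<in> Zi M"
        by (rule Col_unit[OF qC a(2) sS])
      moreover have "tnm F B M (tres F (conjset G g H) B (tcj F g H x)) \<otimes>\<^bsub>tT F M\<^esub> q = q \<otimes>\<^bsub>tT F M\<^esub> tnm F B M (tres F (conjset G g H) B (tcj F g H x))"
        using cr[OF a(2)] tideal_car[OF Yt a(2) a(6)] SN_car[OF okx a(2) sS] by (simp add: cring.cring_simprules(14))
      ultimately show "q \<otimes>\<^bsub>tT F M\<^esub> tnm F B M (tres F (conjset G g H) B (tcj F g H x)) \<in> Zi M" by simp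
    qed
  qed
  have XYZ: "tprod G F Xi Yi L \<subseteq> Zi L" for L
    by (rule adj[OF Zt Yt st2])
  obtain zs where zs: "set zs = Zs" using finite_list[OF Zset_fin[of xs ys]] unfolding Zs_def by blast
  have okzs: "okgen (set zs)" using okz zs by simp
  have "trad G F Xi H \<inter> trad G F Yi H = trad G F Zi H" if H: "subgroup H G" for H
  proof
    show "trad G F Xi H \<inter> trad G F Yi H \<subseteq> trad G F Zi H"
    proof
      fix w assume w: "w \<in> trad G F Xi H \<inter> trad G F Yi H"
      have w1: "w \<in> carrier (tT F H) \<and> (\<exists>n\<ge>1. tsubseteq G (tpow G F (tgen G F {(H, w)}) n) Xi)"
        using w unfolding trad_def by simp
      have w2: "\<exists>n\<ge>1. tsubseteq G (tpow G F (tgen G F {(H, w)}) n) Yi"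
        using w unfolding trad_def by simp
      have wc: "w \<in> carrier (tT F H)" using w1 by simp
      obtain n where n: "1 \<le> n" "tsubseteq G (tpow G F (tgen G F {(H, w)}) n) Xi" using w1 by (elim conjE exE) (rule that)
      obtain m where m: "1 \<le> m" "tsubseteq G (tpow G F (tgen G F {(H, w)}) m) Yi" using w2 by (elim conjE exE) (rule that)
      have okw: "okgen {(H, w)}" using H wc by (simp add: okgen_def)
      define P where "P = tgen G F {(H, w)}"
      have Pt: "tideal G F P" unfolding P_def by (rule tgen_tideal[OF okw])
      have "tsubseteq G (tpow G F P (n + m)) Zi"
        unfolding tsubseteq_def
      proof (intro allI impI)
        fix L assume L: "subgroup L G"
        have "tpow G F P (n + m) L \<subseteq> tprod G F (tpow G F P n) (tpow G F P m) L" by (rule tpow_add[OF Pt n(1) m(1)])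
        also have "\<dots> \<subseteq> tprod G F Xi Yi L"
          by (rule tprod_mono) (use n(2) m(2) in \<open>auto simp: tsubseteq_def P_def\<close>)
        also have "\<dots> \<subseteq> Zi L" by (rule XYZ)
        finally show "tpow G F P (n + m) L \<subseteq> Zi L" .
      qed
      then show "w \<in> trad G F Zi H" unfolding trad_def P_def using wc n(1) by (intro CollectI conjI exI[of _ "n + m"]) auto
    qed
    show "trad G F Zi H \<subseteq> trad G F Xi H \<inter> trad G F Yi H"
    proof
      fix w assume "w \<in> trad G F Zi H"
      then have w1: "w \<in> carrier (tT F H)" and "\<exists>n\<ge>1. tsubseteq G (tpow G F (tgen G F {(H, w)}) n) Zi"
        unfolding trad_def by simp_all
      then obtain n where n: "1 \<le> n" "tsubseteq G (tpow G F (tgen G F {(H, w)}) n) Zi" by (elim conjE exE) (rule that)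
      have nX: "tsubseteq G (tpow G F (tgen G F {(H, w)}) n) Xi" using n(2) ZX unfolding tsubseteq_def by (meson order.trans)
      have nY: "tsubseteq G (tpow G F (tgen G F {(H, w)}) n) Yi" using n(2) ZY unfolding tsubseteq_def by (meson order.trans)
      show "w \<in> trad G F Xi H \<inter> trad G F Yi H" unfolding trad_def using w1 n(1) nX nY by auto
    qed
  qed
  then have "\<forall>H. subgroup H G \<longrightarrow>
     trad G F (tgen G F (set xs)) H \<inter> trad G F (tgen G F (set ys)) H = trad G F (tgen G F (set zs)) H"
    unfolding Xi_def Yi_def Zi_def zs by simp
  then show ?thesis using okzs by (intro exI[of _ zs] conjI)
qed

end

theorem lemma6p3:
  fixes G :: "('g,'m) monoid_scheme" and F :: "('g,'a) tdata"
    and xs ys :: "('g set \<times> 'a) list"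
  assumes "tambara G F"
    and "\<forall>(H, x) \<in> set xs. subgroup H G \<and> x \<in> carrier (tT F H)"
    and "\<forall>(H, y) \<in> set ys. subgroup H G \<and> y \<in> carrier (tT F H)"
  shows "\<exists>zs :: ('g set \<times> 'a) list.
           (\<forall>(H, z) \<in> set zs. subgroup H G \<and> z \<in> carrier (tT F H)) \<and>
           (\<forall>H. subgroup H G \<longrightarrow>
              trad G F (tgen G F (set xs)) H \<inter> trad G F (tgen G F (set ys)) H
                = trad G F (tgen G F (set zs)) H)"
proof -
  interpret tamb G F by (rule tamb.intro[OF assms(1)])
  have ox: "okgen (set xs)" using assms(2) by (simp add: okgen_def)
  have oy: "okgen (set ys)" using assms(3) by (simp add: okgen_def)
  obtain zs where "okgen (set zs)" "\<forall>H. subgroup H G \<longrightarrow>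
     trad G F (tgen G F (set xs)) H \<inter> trad G F (tgen G F (set ys)) H = trad G F (tgen G F (set zs)) H"
    using main[OF ox oy] by (elim exE conjE) (rule that)
  then show ?thesis unfolding okgen_def by (intro exI[of _ zs] conjI)
qed

end
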